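(* Consider the directed $(m,h)$-CCN with a $1$-node passive adversary. In each of the following cases there is a protocol satisfying decodability and secrecy that achieves secrecy rate exactly $\frac{(h-1)^2}{h}$ (hence matching the outer bound $\frac{(h-1)^2}{h}$): (i) $h=2$ and any $m\ge 3$ (rate $\tfrac12$); (ii) $m=h+1$ for any $h\ge 2$; (iii) $h=3$ and $m\in\{4,5,6\}$ (rate $\tfrac43$).
   Context: Network model: a graph with unit-capacity edges; each use of an edge carries one symbol of a finite field $\mathbb{F}$, and entropies are measured in units of $\log|\mathbb{F}|$. A single source $S$ holds a message $\mathcal{W}$ to be multicast to a set of receivers. Each node may use its own private randomness; nodes share no prior common randomness and no side channel. An $N$-round protocol: in each round every edge is used at most once. Decodability: every receiver recovers $\mathcal{W}$ with zero error. Secrecy: $H(\mathcal{W}\mid \mathcal{V}_{\mathcal{A}})=H(\mathcal{W})$, where $\mathcal{V}_{\mathcal{A}}$ is the adversary's view over the whole protocol. The secrecy rate is $H(\mathcal{W})/N$; a rate is achievable if some protocol attains it. A $1$-node passive adversary may choose any single node other than the source and the receivers and observes all values delivered to that node; secrecy must hold for every such choice. Directed $(m,h)$-CCN ($m\ge h$): nodes $S$, $S_1,\dots,S_h$, $A_1,\dots,A_m$, $B_1,\dots,B_m$, and $\binom{m}{h}$ receivers, one per $h$-subset of $\{B_1,\dots,B_m\}$. Directed edges: $S\to S_i$ ($1\le i\le h$); $S_i\to A_i$ ($1\le i\le h$); $S_i\to A_j$ for all $1\le i\le h$, $h<j\le m$; $A_j\to B_j$ ($1\le j\le m$); $B_j\to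 R$ whenever $B_j$ is in the $h$-subset of receiver $R$. *)

theory Defs
  imports "HOL-Probability.Product_PMF"
begin

datatype node = Src | SS nat | AA nat | BB nat | Rcv "nat set"

type_synonym edge = "node \<times> node"

definition receiver_sets :: "nat \<Rightarrow> nat \<Rightarrow> nat set set" where
  "receiver_sets m h = {T. T \<subseteq> {1..m} \<and> card T = h}"

definition ccn_nodes :: "nat \<Rightarrow> nat \<Rightarrow> node set" where
  "ccn_nodes m h = {Src} \<union> SS ` {1..h} \<union> AA ` {1..m} \<union> BB ` {1..m}
                    \<union> Rcv ` receiver_sets m h"

definition ccn_edges :: "nat \<Rightarrow> nat \<Rightarrow> edge set" where
  "ccn_edges m h =
     {(Src, SS i) | i. 1 \<le> i \<and> i \<le> h}
   \<union> {(SS i, AA i) | i. 1 \<le> i \<and> i \<le> h}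
   \<union> {(SS i, AA j) | i j. 1 \<le> i \<and> i \<le> h \<and> h < j \<and> j \<le> m}
   \<union> {(AA j, BB j) | j. 1 \<le> j \<and> j \<le> m}
   \<union> {(BB j, Rcv T) | j T. T \<in> receiver_sets m h \<and> j \<in> T}"

definition adversary_nodes :: "nat \<Rightarrow> nat \<Rightarrow> node set" where
  "adversary_nodes m h = SS ` {1..h} \<union> AA ` {1..m} \<union> BB ` {1..m}"

text \<open>Values delivered to node v: the symbol sequences (one symbol per round) on its incoming edges.\<close>
definition inputs :: "edge set \<Rightarrow> node \<Rightarrow> (edge \<Rightarrow> nat list) \<Rightarrow> (edge \<Rightarrow> nat list option)" where
  "inputs E v X = (\<lambda>e. if e \<in> E \<and> snd e = v then Some (X e) else None)"

text \<open>Local knowledge of a node: the message (source only), its private randomness,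
  and everything delivered to it.\<close>
type_synonym local_view = "nat option \<times> nat \<times> (edge \<Rightarrow> nat list option)"

record protocol =
  msg_dist  :: "nat pmf"
  rand_dist :: "node \<Rightarrow> nat pmf"
  enc       :: "edge \<Rightarrow> local_view \<Rightarrow> nat list"
  dec       :: "node \<Rightarrow> nat \<times> (edge \<Rightarrow> nat list option) \<Rightarrow> nat"

definition local_view :: "edge set \<Rightarrow> node \<Rightarrow> nat \<Rightarrow> (node \<Rightarrow> nat) \<Rightarrow> (edge \<Rightarrow> nat list) \<Rightarrow> local_view" where
  "local_view E u w r X = (if u = Src then Some w else None, r u, inputs E u X)"

text \<open>Execution: the (unique, the network being acyclic) assignment of symbol sequences to edges
  consistent with the encoding functions.\<close>
definition exec :: "nat \<Rightarrow> nat \<Rightarrow> protocol \<Rightarrow> nat \<Rightarrow> (node \<Rightarrow> nat) \<Rightarrow> (edge \<Rightarrow> nat list)" where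
  "exec m h P w r = (THE X. (\<forall>e\<in>ccn_edges m h. X e = enc P e (local_view (ccn_edges m h) (fst e) w r X))
                          \<and> (\<forall>e. e \<notin> ccn_edges m h \<longrightarrow> X e = []))"

definition omega :: "nat \<Rightarrow> nat \<Rightarrow> protocol \<Rightarrow> (nat \<times> (node \<Rightarrow> nat)) pmf" where
  "omega m h P = pair_pmf (msg_dist P) (Pi_pmf (ccn_nodes m h) 0 (rand_dist P))"

definition pmf_entropy :: "real \<Rightarrow> 'a pmf \<Rightarrow> real" where
  "pmf_entropy b p = - (\<Sum>x\<in>set_pmf p. pmf p x * log b (pmf p x))"

definition ent :: "real \<Rightarrow> 'o pmf \<Rightarrow> ('o \<Rightarrow> 'a) \<Rightarrow> real" where
  "ent b \<Omega> f = pmf_entropy b (map_pmf f \<Omega>)"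

definition cond_ent :: "real \<Rightarrow> 'o pmf \<Rightarrow> ('o \<Rightarrow> 'a) \<Rightarrow> ('o \<Rightarrow> 'c) \<Rightarrow> real" where
  "cond_ent b \<Omega> f g = ent b \<Omega> (\<lambda>z. (f z, g z)) - ent b \<Omega> g"

definition is_field_size :: "nat \<Rightarrow> bool" where
  "is_field_size q \<longleftrightarrow> (\<exists>p k. prime p \<and> k \<ge> 1 \<and> q = p ^ k)"

definition adversary_view :: "nat \<Rightarrow> nat \<Rightarrow> protocol \<Rightarrow> node \<Rightarrow> nat \<times> (node \<Rightarrow> nat) \<Rightarrow> (edge \<Rightarrow> nat list option)" where
  "adversary_view m h P a = (\<lambda>(w, r). inputs (ccn_edges m h) a (exec m h P w r))"

definition secure_protocol :: "nat \<Rightarrow> nat \<Rightarrow> nat \<Rightarrow> nat \<Rightarrow> protocol \<Rightarrow> bool" where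
  "secure_protocol m h q N P \<longleftrightarrow>
     N \<ge> 1
   \<and> finite (set_pmf (msg_dist P))
   \<and> (\<forall>v\<in>ccn_nodes m h. finite (set_pmf (rand_dist P v)))
   \<comment> \<open>each edge carries one field symbol per round, N rounds\<close>
   \<and> (\<forall>e\<in>ccn_edges m h. \<forall>x. length (enc P e x) = N \<and> set (enc P e x) \<subseteq> {..<q})
   \<comment> \<open>decodability with zero error\<close>
   \<and> (\<forall>T\<in>receiver_sets m h. \<forall>(w, r)\<in>set_pmf (omega m h P).
        dec P (Rcv T) (r (Rcv T), inputs (ccn_edges m h) (Rcv T) (exec m h P w r)) = w)
   \<comment> \<open>secrecy against every 1-node passive adversary\<close>
   \<and> (\<forall>a\<in>adversary_nodes m h.
        cond_ent (real q) (omega m h P) fst (adversary_view m h P a) = ent (real q) (omega m h P) fst)"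

definition secrecy_rate :: "nat \<Rightarrow> nat \<Rightarrow> nat \<Rightarrow> nat \<Rightarrow> protocol \<Rightarrow> real" where
  "secrecy_rate m h q N P = ent (real q) (omega m h P) fst / real N"

end

theory Submission
  imports Defs "HOL-Computational_Algebra.Primes"
begin

lemma pmf_entropy_pair:
  assumes "finite (set_pmf M)" "finite (set_pmf D)"
  shows "pmf_entropy b (pair_pmf M D) = pmf_entropy b M + pmf_entropy b D"
proof -
  have s1: "sum (pmf M) (set_pmf M) = 1" by (rule sum_pmf_eq_1) (use assms in auto)
  have s2: "sum (pmf D) (set_pmf D) = 1" by (rule sum_pmf_eq_1) (use assms in auto)
  have "(\<Sum>z\<in>set_pmf (pair_pmf M D). pmf (pair_pmf M D) z * log b (pmf (pair_pmf M D) z))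
      = (\<Sum>x\<in>set_pmf M. \<Sum>y\<in>set_pmf D. pmf M x * pmf D y * (log b (pmf M x) + log b (pmf D y)))"
    unfolding set_pair_pmf sum.cartesian_product
    by (intro sum.cong refl) (auto simp: pmf_pair log_mult pmf_positive)
  also have "\<dots> = (\<Sum>x\<in>set_pmf M. pmf M x * log b (pmf M x) * (\<Sum>y\<in>set_pmf D. pmf D y))
       + (\<Sum>y\<in>set_pmf D. pmf D y * log b (pmf D y)) * (\<Sum>x\<in>set_pmf M. pmf M x)"
    by (simp add: sum_distrib_left sum_distrib_right sum.distrib algebra_simps sum.swap[of _ "set_pmf D"])
  finally show ?thesis unfolding pmf_entropy_def using s1 s2 by simp
qed

lemma pmf_entropy_uniform:
  assumes "finite S" "S \<noteq> {}"
  shows "pmf_entropy b (pmf_of_set S) = log b (real (card S))"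
proof -
  have c: "card S > 0" using assms by (simp add: card_gt_0_iff)
  have "pmf_entropy b (pmf_of_set S) = - (\<Sum>x\<in>S. (1 / real (card S)) * log b (1 / real (card S)))"
    unfolding pmf_entropy_def using assms by (intro arg_cong[where f=uminus] sum.cong) auto
  also have "\<dots> = - log b (1 / real (card S))" using c by simp
  also have "\<dots> = log b (real (card S))" using c by (simp add: log_def ln_div)
  finally show ?thesis .
qed

lemma pair_as_bind: "pair_pmf M D = bind_pmf M (\<lambda>w. map_pmf (Pair w) D)"
  by (simp add: pair_pmf_def map_pmf_def)

lemma secrecy_generic:
  fixes M :: "'w pmf" and R :: "'r pmf" and V :: "'w \<times> 'r \<Rightarrow> 'v"
  assumes fM: "finite (set_pmf M)" and fD: "finite (set_pmf D)"
  and inv: "\<And>w. w \<in> set_pmf M \<Longrightarrow> map_pmf (\<lambda>r. V (w, r)) R = D"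
  shows "cond_ent b (pair_pmf M R) fst V = ent b (pair_pmf M R) fst"
proof -
  have J: "map_pmf (\<lambda>z. (fst z, V z)) (pair_pmf M R) = pair_pmf M D"
  proof -
    have "map_pmf (\<lambda>z. (fst z, V z)) (pair_pmf M R)
       = bind_pmf M (\<lambda>w. map_pmf (Pair w) (map_pmf (\<lambda>r. V (w, r)) R))"
      unfolding pair_as_bind map_bind_pmf by (simp add: pmf.map_comp o_def)
    also have "\<dots> = bind_pmf M (\<lambda>w. map_pmf (Pair w) D)"
      by (intro bind_pmf_cong refl) (simp add: inv)
    finally show ?thesis by (simp add: pair_as_bind)
  qed
  have V: "map_pmf V (pair_pmf M R) = D"
  proof -
    have "map_pmf V (pair_pmf M R) = map_pmf snd (map_pmf (\<lambda>z. (fst z, V z)) (pair_pmf M R))"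
      by (simp add: pmf.map_comp o_def)
    then show ?thesis using J by (simp add: map_snd_pair_pmf)
  qed
  show ?thesis unfolding cond_ent_def ent_def J V map_fst_pair_pmf
    using pmf_entropy_pair[OF fM fD] by simp
qed

definition normN :: "nat \<Rightarrow> nat \<Rightarrow> nat list \<Rightarrow> nat list" where
  "normN q N l = map (\<lambda>t. l ! t mod q) [0..<N]"

definition getl :: "(edge \<Rightarrow> nat list option) \<Rightarrow> edge \<Rightarrow> nat list" where
  "getl inp e = (case inp e of Some l \<Rightarrow> l | None \<Rightarrow> [])"

lemma normN_idem[simp]: "normN q N (normN q N l) = normN q N l"
  by (simp add: normN_def)

lemma length_normN[simp]: "length (normN q N l) = N"
  by (simp add: normN_def)

lemma nth_normN[simp]: "t < N \<Longrightarrow> normN q N l ! t = l ! t mod q"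
  by (simp add: normN_def)

fun encE :: "nat \<Rightarrow> nat \<Rightarrow> (nat \<Rightarrow> nat list \<times> nat list \<Rightarrow> nat list) \<Rightarrow> (nat \<Rightarrow> nat \<Rightarrow> nat list \<Rightarrow> nat list)
   \<Rightarrow> (nat \<Rightarrow> (nat \<Rightarrow> nat list) \<Rightarrow> nat list) \<Rightarrow> edge \<Rightarrow> local_view \<Rightarrow> nat list" where
  "encE q N xs sa ab (Src, SS i) (wo, x, inp) = normN q N (xs i (from_nat (case wo of Some w \<Rightarrow> w | None \<Rightarrow> 0), from_nat x))"
| "encE q N xs sa ab (SS i, AA j) (wo, x, inp) = normN q N (sa i j (getl inp (Src, SS i)))"
| "encE q N xs sa ab (AA j, BB j') (wo, x, inp) = normN q N (ab j (\<lambda>i. getl inp (SS i, AA j)))"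
| "encE q N xs sa ab (BB j, Rcv T) (wo, x, inp) = normN q N (getl inp (AA j, BB j))"
| "encE q N xs sa ab _ _ = []"

locale scheme =
  fixes m h q N K L :: nat
    and xs :: "nat \<Rightarrow> nat list \<times> nat list \<Rightarrow> nat list"
    and sa :: "nat \<Rightarrow> nat \<Rightarrow> nat list \<Rightarrow> nat list"
    and ab :: "nat \<Rightarrow> (nat \<Rightarrow> nat list) \<Rightarrow> nat list"
  assumes q1: "q > 1" and N1: "N \<ge> 1"
begin

abbreviation "E \<equiv> ccn_edges m h"

definition Xv :: "nat \<Rightarrow> nat list \<times> nat list \<Rightarrow> nat list" where
  "Xv i d = normN q N (xs i d)"
definition Sv :: "nat \<Rightarrow> nat \<Rightarrow> nat list \<times> nat list \<Rightarrow> nat list" where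
  "Sv i j d = normN q N (sa i j (Xv i d))"
definition Yv :: "nat \<Rightarrow> nat list \<times> nat list \<Rightarrow> nat list" where
  "Yv j d = normN q N (ab j (\<lambda>i. if (SS i, AA j) \<in> E then Sv i j d else []))"

fun X0f :: "nat list \<times> nat list \<Rightarrow> edge \<Rightarrow> nat list" where
  "X0f d (Src, SS i) = Xv i d"
| "X0f d (SS i, AA j) = Sv i j d"
| "X0f d (AA j, BB j') = Yv j d"
| "X0f d (BB j, Rcv T) = Yv j d"
| "X0f d _ = []"

definition X0 :: "nat list \<times> nat list \<Rightarrow> edge \<Rightarrow> nat list" where
  "X0 d e = (if e \<in> E then X0f d e else [])"

definition Wl where "Wl = {l. set l \<subseteq> {..<q} \<and> length l = K}"
definition Kl where "Kl = {l. set l \<subseteq> {..<q} \<and> length l = L}"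

definition decF :: "node \<Rightarrow> nat \<times> (edge \<Rightarrow> nat list option) \<Rightarrow> nat" where
  "decF v z = (case v of Rcv T \<Rightarrow> (SOME w. \<exists>wl\<in>Wl. \<exists>kl\<in>Kl. w = to_nat wl \<and> inputs E (Rcv T) (X0 (wl, kl)) = snd z) | _ \<Rightarrow> 0)"

definition P :: protocol where
  "P = \<lparr> msg_dist = pmf_of_set (to_nat ` Wl),
         rand_dist = (\<lambda>v. if v = Src then pmf_of_set (to_nat ` Kl) else return_pmf 0),
         enc = encE q N xs sa ab, dec = decF \<rparr>"

lemma edges_cases:
  assumes "e \<in> E"
  obtains (S) i where "e = (Src, SS i)" "1 \<le> i" "i \<le> h"
  | (SA) i j where "e = (SS i, AA j)" "1 \<le> i" "i \<le> h" "i = j \<or> (h < j \<and> j \<le> m)"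
  | (AB) j where "e = (AA j, BB j)" "1 \<le> j" "j \<le> m"
  | (BR) j T where "e = (BB j, Rcv T)" "T \<in> receiver_sets m h" "j \<in> T"
  using assms unfolding ccn_edges_def by blast

lemma BR_AB: "T \<in> receiver_sets m h \<Longrightarrow> j \<in> T \<Longrightarrow> (AA j, BB j) \<in> E"
  unfolding ccn_edges_def receiver_sets_def by auto

lemma SA_S: "(SS i, AA j) \<in> E \<Longrightarrow> (Src, SS i) \<in> E"
  unfolding ccn_edges_def by auto

lemma getl_inputs: "getl (inputs E u X) e = (if e \<in> E \<and> snd e = u then X e else [])"
  by (simp add: getl_def inputs_def)

lemma X0_fix:
  "e \<in> E \<Longrightarrow> X0 (from_nat w, from_nat (r Src)) e
     = encE q N xs sa ab e (local_view E (fst e) w r (X0 (from_nat w, from_nat (r Src))))"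
proof (erule edges_cases)
  fix i assume "e = (Src, SS i)" "1 \<le> i" "i \<le> h"
  then show ?thesis by (simp add: X0_def local_view_def ccn_edges_def Xv_def)
next
  fix i j assume a: "e = (SS i, AA j)" "1 \<le> i" "i \<le> h" "i = j \<or> (h < j \<and> j \<le> m)"
  then have "e \<in> E" "(Src, SS i) \<in> E" by (auto simp: ccn_edges_def)
  then show ?thesis using a by (simp add: X0_def local_view_def getl_inputs Sv_def)
next
  fix j assume a: "e = (AA j, BB j)" "1 \<le> j" "j \<le> m"
  then have "e \<in> E" by (auto simp: ccn_edges_def)
  then show ?thesis using a by (simp add: X0_def local_view_def getl_inputs Yv_def cong: if_cong)
next
  fix j T assume a: "e = (BB j, Rcv T)" "T \<in> receiver_sets m h" "j \<in> T"
  then have "e \<in> E" "(AA j, BB j) \<in> E" using BR_AB by (auto simp: ccn_edges_def)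
  then show ?thesis using a by (simp add: X0_def local_view_def getl_inputs Yv_def)
qed

lemma exec_eq: "exec m h P w r = X0 (from_nat w, from_nat (r Src))"
  unfolding exec_def
proof (rule the_equality)
  let ?X = "X0 (from_nat w, from_nat (r Src))"
  show "(\<forall>e\<in>E. ?X e = enc P e (local_view E (fst e) w r ?X)) \<and> (\<forall>e. e \<notin> E \<longrightarrow> ?X e = [])"
    using X0_fix by (simp add: P_def X0_def)
next
  fix X assume A: "(\<forall>e\<in>E. X e = enc P e (local_view E (fst e) w r X)) \<and> (\<forall>e. e \<notin> E \<longrightarrow> X e = [])"
  let ?d = "(from_nat w, from_nat (r Src)) :: nat list \<times> nat list"
  have fx: "\<And>e. e \<in> E \<Longrightarrow> X e = encE q N xs sa ab e (local_view E (fst e) w r X)"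
    using A by (simp add: P_def)
  have s1: "\<And>i. (Src, SS i) \<in> E \<Longrightarrow> X (Src, SS i) = Xv i ?d"
    using fx by (simp add: local_view_def Xv_def)
  have s2: "\<And>i j. (SS i, AA j) \<in> E \<Longrightarrow> X (SS i, AA j) = Sv i j ?d"
    using fx s1 SA_S by (simp add: local_view_def getl_inputs Sv_def)
  have s3: "\<And>j. (AA j, BB j) \<in> E \<Longrightarrow> X (AA j, BB j) = Yv j ?d"
  proof -
    fix j assume "(AA j, BB j) \<in> E"
    then have "X (AA j, BB j) = normN q N (ab j (\<lambda>i. if (SS i, AA j) \<in> E then X (SS i, AA j) else []))"
      using fx by (simp add: local_view_def getl_inputs)
    also have "(\<lambda>i. if (SS i, AA j) \<in> E then X (SS i, AA j) else []) = (\<lambda>i. if (SS i, AA j) \<in> E then Sv i j ?d else [])"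
      using s2 by auto
    finally show "X (AA j, BB j) = Yv j ?d" by (simp add: Yv_def)
  qed
  show "X = X0 ?d"
  proof
    fix e show "X e = X0 ?d e"
    proof (cases "e \<in> E")
      case False then show ?thesis using A by (simp add: X0_def del: split_paired_All)
    next
      case True
      then show ?thesis
      proof (cases rule: edges_cases)
        case (S i) then show ?thesis using True s1 by (simp add: X0_def)
      next
        case (SA i j) then show ?thesis using True s2 by (simp add: X0_def)
      next
        case (AB j) then show ?thesis using True s3 by (simp add: X0_def)
      next
        case (BR j T)
        then have "(AA j, BB j) \<in> E" using BR_AB by auto
        then show ?thesis using True BR fx s3 by (simp add: X0_def local_view_def getl_inputs Yv_def)
      qed
    qed
  qed
qed


lemma finite_nodes: "finite (ccn_nodes m h)"
  unfolding ccn_nodes_def receiver_sets_def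
  by (intro finite_UnI finite_imageI) (auto intro: finite_subset[of _ "Pow {1..m}"])

lemma Src_node: "Src \<in> ccn_nodes m h" by (simp add: ccn_nodes_def)

lemma finite_Wl: "finite Wl" unfolding Wl_def by (rule finite_lists_length_eq) simp
lemma finite_Kl: "finite Kl" unfolding Kl_def by (rule finite_lists_length_eq) simp
lemma Wl_ne: "replicate K 0 \<in> Wl" using q1 by (auto simp: Wl_def)
lemma Kl_ne: "replicate L 0 \<in> Kl" using q1 by (auto simp: Kl_def)
lemma card_Wl: "card Wl = q ^ K" unfolding Wl_def by (subst card_lists_length_eq) auto

lemma set_Kl_pmf[simp]: "set_pmf (pmf_of_set Kl) = Kl"
  using finite_Kl Kl_ne by (intro set_pmf_of_set) auto

lemma inj_to_nat_on: "inj_on (to_nat :: nat list \<Rightarrow> nat) A"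
  by simp

lemma set_msg: "set_pmf (msg_dist P) = to_nat ` Wl"
  using finite_Wl Wl_ne by (simp add: P_def, intro set_pmf_of_set) auto

lemma set_rand_Src: "set_pmf (rand_dist P Src) = to_nat ` Kl"
  using finite_Kl Kl_ne by (simp add: P_def, intro set_pmf_of_set) auto

lemma omega_supp:
  assumes "(w, r) \<in> set_pmf (omega m h P)"
  shows "from_nat w \<in> Wl" "from_nat (r Src) \<in> Kl" "w = to_nat (from_nat w :: nat list)"
proof -
  have "w \<in> to_nat ` Wl" using assms set_msg by (auto simp: omega_def)
  then show "from_nat w \<in> Wl" "w = to_nat (from_nat w :: nat list)" by auto
  have "r \<in> set_pmf (Pi_pmf (ccn_nodes m h) 0 (rand_dist P))" using assms by (auto simp: omega_def)
  then have "r Src \<in> set_pmf (map_pmf (\<lambda>f. f Src) (Pi_pmf (ccn_nodes m h) 0 (rand_dist P)))" by auto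
  then have "r Src \<in> to_nat ` Kl" by (simp add: Pi_pmf_component[OF finite_nodes] Src_node set_rand_Src)
  then show "from_nat (r Src) \<in> Kl" by auto
qed

lemma rand_marg: "map_pmf (\<lambda>r. from_nat (r Src) :: nat list) (Pi_pmf (ccn_nodes m h) 0 (rand_dist P)) = pmf_of_set Kl"
proof -
  have "map_pmf (\<lambda>r. from_nat (r Src) :: nat list) (Pi_pmf (ccn_nodes m h) 0 (rand_dist P))
      = map_pmf from_nat (map_pmf (\<lambda>r. r Src) (Pi_pmf (ccn_nodes m h) 0 (rand_dist P)))"
    by (simp add: pmf.map_comp o_def)
  also have "\<dots> = map_pmf from_nat (pmf_of_set (to_nat ` Kl))"
    by (simp add: Pi_pmf_component[OF finite_nodes] Src_node P_def)
  also have "pmf_of_set (to_nat ` Kl) = map_pmf to_nat (pmf_of_set Kl)"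
    using finite_Kl Kl_ne by (subst map_pmf_of_set_inj) (auto simp: inj_to_nat_on)
  finally show ?thesis by (simp add: pmf.map_comp o_def)
qed

theorem scheme_secure:
  assumes Dec: "\<And>T d d'. T \<in> receiver_sets m h \<Longrightarrow> fst d \<in> Wl \<Longrightarrow> snd d \<in> Kl \<Longrightarrow> fst d' \<in> Wl \<Longrightarrow> snd d' \<in> Kl
        \<Longrightarrow> (\<forall>j\<in>T. Yv j d = Yv j d') \<Longrightarrow> fst d = fst d'"
  and Sec: "\<And>a wl. a \<in> adversary_nodes m h \<Longrightarrow> wl \<in> Wl \<Longrightarrow> \<exists>\<pi>. inj_on \<pi> Kl \<and> \<pi> ` Kl \<subseteq> Kl \<and>
        (\<forall>kl\<in>Kl. \<forall>e\<in>E. snd e = a \<longrightarrow> X0 (wl, kl) e = X0 (replicate K 0, \<pi> kl) e)"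
  shows "secure_protocol m h q N P \<and> secrecy_rate m h q N P = real K / real N"
proof -
  have q0: "q > 0" using q1 by simp
  have c1: "finite (set_pmf (msg_dist P))" using set_msg finite_Wl by simp
  have c2: "\<forall>v\<in>ccn_nodes m h. finite (set_pmf (rand_dist P v))"
    using set_rand_Src finite_Kl by (auto simp: P_def)
  have c3: "\<forall>e\<in>E. \<forall>x. length (enc P e x) = N \<and> set (enc P e x) \<subseteq> {..<q}"
  proof (intro ballI allI)
    fix e and x :: local_view assume "e \<in> E"
    moreover obtain wo y inp where x: "x = (wo, y, inp)" by (cases x) auto
    have nq: "\<And>l. set (normN q N l) \<subseteq> {..<q}" using q0 by (auto simp: normN_def)
    ultimately show "length (enc P e x) = N \<and> set (enc P e x) \<subseteq> {..<q}"
      by (cases rule: edges_cases) (auto simp: P_def x nq)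
  qed
  have c4: "\<forall>T\<in>receiver_sets m h. \<forall>(w, r)\<in>set_pmf (omega m h P).
        dec P (Rcv T) (r (Rcv T), inputs E (Rcv T) (exec m h P w r)) = w"
  proof (intro ballI, clarify)
    fix T w r assume T: "T \<in> receiver_sets m h" and wr: "(w, r) \<in> set_pmf (omega m h P)"
    note s = omega_supp[OF wr]
    define wl :: "nat list" where "wl = from_nat w"
    define kl :: "nat list" where "kl = from_nat (r Src)"
    have ex: "\<exists>w'. \<exists>wl'\<in>Wl. \<exists>kl'\<in>Kl. w' = to_nat wl' \<and> inputs E (Rcv T) (X0 (wl', kl')) = inputs E (Rcv T) (X0 (wl, kl))"
      using s unfolding wl_def kl_def by blast
    have "dec P (Rcv T) (r (Rcv T), inputs E (Rcv T) (exec m h P w r))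
        = (SOME w'. \<exists>wl'\<in>Wl. \<exists>kl'\<in>Kl. w' = to_nat wl' \<and> inputs E (Rcv T) (X0 (wl', kl')) = inputs E (Rcv T) (X0 (wl, kl)))"
      unfolding exec_eq by (simp add: P_def decF_def wl_def kl_def)
    also have "\<dots> = w"
    proof (rule someI2_ex[OF ex], clarify)
      fix wl' kl' assume W: "wl' \<in> Wl" "kl' \<in> Kl" and I: "inputs E (Rcv T) (X0 (wl', kl')) = inputs E (Rcv T) (X0 (wl, kl))"
      have "\<forall>j\<in>T. Yv j (wl', kl') = Yv j (wl, kl)"
      proof
        fix j assume j: "j \<in> T"
        then have e: "(BB j, Rcv T) \<in> E" using T by (auto simp: ccn_edges_def)
        have "inputs E (Rcv T) (X0 (wl', kl')) (BB j, Rcv T) = inputs E (Rcv T) (X0 (wl, kl)) (BB j, Rcv T)"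
          using I by simp
        then show "Yv j (wl', kl') = Yv j (wl, kl)" using e by (simp add: inputs_def X0_def)
      qed
      then have "wl' = wl" using Dec[OF T, of "(wl', kl')" "(wl, kl)"] W s by (simp add: wl_def kl_def)
      then show "to_nat wl' = w" using s by (simp add: wl_def)
    qed
    finally show "dec P (Rcv T) (r (Rcv T), inputs E (Rcv T) (exec m h P w r)) = w" .
  qed
  have c5: "\<forall>a\<in>adversary_nodes m h.
        cond_ent (real q) (omega m h P) fst (adversary_view m h P a) = ent (real q) (omega m h P) fst"
  proof
    fix a assume a: "a \<in> adversary_nodes m h"
    let ?R = "Pi_pmf (ccn_nodes m h) 0 (rand_dist P)"
    define D where "D = map_pmf (\<lambda>kl. inputs E a (X0 (replicate K 0, kl))) (pmf_of_set Kl)"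
    have fD: "finite (set_pmf D)" using finite_Kl by (simp add: D_def)
    show "cond_ent (real q) (omega m h P) fst (adversary_view m h P a) = ent (real q) (omega m h P) fst"
      unfolding omega_def
    proof (rule secrecy_generic[OF c1 fD])
      fix w assume "w \<in> set_pmf (msg_dist P)"
      then have wl: "from_nat w \<in> Wl" using set_msg by auto
      obtain \<pi> where pi: "inj_on \<pi> Kl" "\<pi> ` Kl \<subseteq> Kl"
        and eq: "\<forall>kl\<in>Kl. \<forall>e\<in>E. snd e = a \<longrightarrow> X0 (from_nat w, kl) e = X0 (replicate K 0, \<pi> kl) e"
        using Sec[OF a wl] by blast
      have piK: "\<pi> ` Kl = Kl" using endo_inj_surj[OF finite_Kl pi(2) pi(1)] .
      have "map_pmf (\<lambda>r. adversary_view m h P a (w, r)) ?R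
          = map_pmf (\<lambda>kl. inputs E a (X0 (from_nat w, kl))) (map_pmf (\<lambda>r. from_nat (r Src) :: nat list) ?R)"
        by (simp add: adversary_view_def exec_eq pmf.map_comp o_def)
      also have "\<dots> = map_pmf (\<lambda>kl. inputs E a (X0 (from_nat w, kl))) (pmf_of_set Kl)"
        by (simp add: rand_marg)
      also have "\<dots> = map_pmf (\<lambda>kl. inputs E a (X0 (replicate K 0, \<pi> kl))) (pmf_of_set Kl)"
      proof (rule pmf.map_cong[OF refl])
        fix kl assume "kl \<in> set_pmf (pmf_of_set Kl)"
        then have "kl \<in> Kl" using finite_Kl Kl_ne by auto
        then show "inputs E a (X0 (from_nat w, kl)) = inputs E a (X0 (replicate K 0, \<pi> kl))"
          using eq unfolding inputs_def by auto
      qed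
      also have "\<dots> = map_pmf (\<lambda>kl. inputs E a (X0 (replicate K 0, kl))) (map_pmf \<pi> (pmf_of_set Kl))"
        by (simp add: pmf.map_comp o_def)
      also have "map_pmf \<pi> (pmf_of_set Kl) = pmf_of_set Kl"
        using map_pmf_of_set_inj[OF pi(1)] finite_Kl Kl_ne piK by auto
      finally show "map_pmf (\<lambda>r. adversary_view m h P a (w, r)) ?R = D" by (simp add: D_def)
    qed
  qed
  have ent: "ent (real q) (omega m h P) fst = real K"
  proof -
    have "ent (real q) (omega m h P) fst = pmf_entropy (real q) (pmf_of_set (to_nat ` Wl))"
      by (simp add: ent_def omega_def map_fst_pair_pmf P_def)
    also have "\<dots> = log (real q) (real (card (to_nat ` Wl)))"
      using finite_Wl Wl_ne by (intro pmf_entropy_uniform) auto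
    also have "card (to_nat ` Wl) = q ^ K" using card_Wl by (simp add: card_image inj_to_nat_on)
    also have "log (real q) (real (q ^ K)) = real K" using q1 by (simp add: log_nat_power)
    finally show ?thesis .
  qed
  show ?thesis unfolding secure_protocol_def secrecy_rate_def
    using N1 c1 c2 c3 c4 c5 ent by auto
qed

end

lemma add_mod_cancel:
  assumes "(a + c) mod q = (b + c) mod (q::nat)" shows "a mod q = b mod q"
proof -
  have "(int a + int c) mod int q = (int b + int c) mod int q"
    using arg_cong[OF assms, of int] by (simp add: zmod_int)
  hence "(int a + int c - int c) mod int q = (int b + int c - int c) mod int q"
    by (rule mod_diff_cong) simp
  hence "int a mod int q = int b mod int q" by simp
  thus ?thesis by (metis of_nat_eq_iff zmod_int)
qed

lemma mod_eq_less: "a < q \<Longrightarrow> b < q \<Longrightarrow> a mod q = b mod (q::nat) \<Longrightarrow> a = b"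
  by simp

definition mk :: "nat \<Rightarrow> nat \<Rightarrow> nat" where "mk i t = (if t + 1 < i then t else t + 1)"
definition um :: "nat \<Rightarrow> nat \<Rightarrow> nat" where "um i c = (if c + 1 < i then c else c - 1)"

lemma um_mk: "um i (mk i t) = t" by (simp add: mk_def um_def)
lemma mk_ne: "i \<ge> 1 \<Longrightarrow> mk i t \<noteq> i - 1" unfolding mk_def by auto

lemma nth_lt: "set l \<subseteq> {..<q} \<Longrightarrow> c < length l \<Longrightarrow> l ! c < (q::nat)"
  by (meson lessThan_iff nth_mem subsetD)
lemma mk_less: "t + 1 < h \<Longrightarrow> mk i t < h" by (simp add: mk_def)

definition share :: "nat \<Rightarrow> nat list \<Rightarrow> nat \<Rightarrow> nat \<Rightarrow> nat" where
  "share h wl i t = (if i < h then wl ! ((i - 1) * (h - 1) + t) else (\<Sum>b<h - 1. wl ! (b * (h - 1) + t)))"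

definition xsS :: "nat \<Rightarrow> nat \<Rightarrow> nat list \<times> nat list \<Rightarrow> nat list" where
  "xsS h i d = map (\<lambda>s. if s = 0 then snd d ! (i - 1) else share h (fst d) i (s - 1) + snd d ! mk i (s - 1)) [0..<h]"

definition coefS :: "nat \<Rightarrow> (nat \<Rightarrow> nat \<Rightarrow> nat \<Rightarrow> nat) \<Rightarrow> nat \<Rightarrow> nat \<Rightarrow> nat \<Rightarrow> nat" where
  "coefS h ext j i s = (if j = h + 1 then (if s = 0 then 1 else 0) else ext j i s)"

definition saS :: "nat \<Rightarrow> (nat \<Rightarrow> nat \<Rightarrow> nat \<Rightarrow> nat) \<Rightarrow> nat \<Rightarrow> nat \<Rightarrow> nat list \<Rightarrow> nat list" where
  "saS h ext i j l = (if j \<le> h then l else map (\<lambda>t. if t = 0 then (\<Sum>s<h. coefS h ext j i s * l ! s) else 0) [0..<h])"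

definition abS :: "nat \<Rightarrow> nat \<Rightarrow> (nat \<Rightarrow> nat list) \<Rightarrow> nat list" where
  "abS h j g = (if j \<le> h then g j else map (\<lambda>t. g (t + 1) ! 0) [0..<h])"

definition tr :: "nat \<Rightarrow> (nat \<Rightarrow> nat) \<Rightarrow> nat list \<Rightarrow> nat list" where
  "tr q \<delta> kl = map (\<lambda>c. (kl ! c + \<delta> c) mod q) [0..<length kl]"

locale sch =
  fixes m h q :: nat and ext :: "nat \<Rightarrow> nat \<Rightarrow> nat \<Rightarrow> nat"
  assumes q1': "q > 1" and h2: "h \<ge> 2"
begin

sublocale scheme m h q h "(h - 1)^2" h "xsS h" "saS h ext" "abS h"
  using q1' h2 by unfold_locales auto

definition Zf :: "nat \<Rightarrow> nat \<Rightarrow> nat list \<times> nat list \<Rightarrow> nat" where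
  "Zf i j d = (\<Sum>s<h. coefS h ext j i s * (Xv i d ! s)) mod q"

lemma Xv_nth: "s < h \<Longrightarrow> Xv i d ! s = (if s = 0 then snd d ! (i - 1) else share h (fst d) i (s - 1) + snd d ! mk i (s - 1)) mod q"
  by (simp add: Xv_def xsS_def)

lemma Yv_low: "1 \<le> j \<Longrightarrow> j \<le> h \<Longrightarrow> Yv j d = Xv j d"
  by (simp add: Yv_def abS_def ccn_edges_def Sv_def saS_def Xv_def)

lemma Sv_high: "h < j \<Longrightarrow> Sv i j d = map (\<lambda>t. if t = 0 then Zf i j d else 0) [0..<h]"
  by (simp add: Sv_def saS_def normN_def Zf_def)

lemma Yv_high: "h < j \<Longrightarrow> j \<le> m \<Longrightarrow> Yv j d = map (\<lambda>t. Zf (t + 1) j d) [0..<h]"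
proof -
  assume j: "h < j" "j \<le> m"
  have "\<And>t. t < h \<Longrightarrow> (SS (t + 1), AA j) \<in> E" using j by (auto simp: ccn_edges_def)
  then show ?thesis using j h2 by (simp add: Yv_def abS_def Sv_high normN_def Zf_def)
qed

lemma tr_inj: "inj_on (tr q \<delta>) Kl"
proof (rule inj_onI)
  fix a b assume a: "a \<in> Kl" and b: "b \<in> Kl" and e: "tr q \<delta> a = tr q \<delta> b"
  show "a = b"
  proof (rule nth_equalityI)
    show "length a = length b" using a b by (simp add: Kl_def)
    fix c assume c: "c < length a"
    then have "(a ! c + \<delta> c) mod q = (b ! c + \<delta> c) mod q"
      using arg_cong[OF e, of "\<lambda>l. l ! c"] a b by (simp add: tr_def Kl_def)
    then have "a ! c mod q = b ! c mod q" by (rule add_mod_cancel)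
    moreover have "a ! c < q" "b ! c < q" using a b c by (auto simp: Kl_def intro!: nth_lt)
    ultimately show "a ! c = b ! c" by simp
  qed
qed

lemma tr_into: "tr q \<delta> ` Kl \<subseteq> Kl"
  using q1' by (auto simp: tr_def Kl_def)

lemma tr_nth: "kl \<in> Kl \<Longrightarrow> c < h \<Longrightarrow> tr q \<delta> kl ! c = (kl ! c + \<delta> c) mod q"
  by (simp add: tr_def Kl_def)


abbreviation "w0 \<equiv> replicate ((h - 1)^2) (0::nat)"

lemma idx1: "1 \<le> i \<Longrightarrow> i < h \<Longrightarrow> t < h - 1 \<Longrightarrow> (i - 1) * (h - 1) + t < (h - 1)^2"
proof -
  assume a: "1 \<le> i" "i < h" "t < h - 1"
  have "(i - 1) * (h - 1) + t < (i - 1) * (h - 1) + (h - 1)" using a by simp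
  also have "\<dots> = i * (h - 1)" using a by (cases i) auto
  also have "\<dots> \<le> (h - 1) * (h - 1)" using a by simp
  finally show ?thesis by (simp add: power2_eq_square)
qed

lemma idx2: "b < h - 1 \<Longrightarrow> t < h - 1 \<Longrightarrow> b * (h - 1) + t < (h - 1)^2"
  using idx1[of "b + 1" t] by simp

lemma share0: "1 \<le> i \<Longrightarrow> i \<le> h \<Longrightarrow> t < h - 1 \<Longrightarrow> share h w0 i t = 0"
proof -
  assume a: "1 \<le> i" "i \<le> h" "t < h - 1"
  show ?thesis
  proof (cases "i < h")
    case True
    have "(i - 1) * (h - 1) + t < (h - 1)^2" using idx1 a True by blast
    then show ?thesis using True by (simp add: share_def)
  next
    case False
    have "\<And>b. b < h - 1 \<Longrightarrow> b * (h - 1) + t < (h - 1)^2" using idx2 a by blast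
    then show ?thesis using False by (simp add: share_def)
  qed
qed

lemma Wl_nth: "wl \<in> Wl \<Longrightarrow> n < (h - 1)^2 \<Longrightarrow> wl ! n < q"
  unfolding Wl_def by (auto intro!: nth_lt)

lemma Kl_nth: "kl \<in> Kl \<Longrightarrow> n < h \<Longrightarrow> kl ! n < q"
  unfolding Kl_def by (auto intro!: nth_lt)

lemma length_Xv[simp]: "length (Xv i d) = h" by (simp add: Xv_def)

lemma sec_X:
  assumes i: "1 \<le> i" "i \<le> h"
  shows "\<exists>\<delta>. \<forall>kl\<in>Kl. Xv i (wl, kl) = Xv i (w0, tr q \<delta> kl)"
proof (intro exI ballI)
  fix kl assume kl: "kl \<in> Kl"
  let ?\<delta> = "\<lambda>c. if c = i - 1 then 0 else share h wl i (um i c)"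
  show "Xv i (wl, kl) = Xv i (w0, tr q ?\<delta> kl)"
  proof (rule nth_equalityI)
    fix s assume "s < length (Xv i (wl, kl))"
    then have s: "s < h" by simp
    show "Xv i (wl, kl) ! s = Xv i (w0, tr q ?\<delta> kl) ! s"
    proof (cases "s = 0")
      case True
      then show ?thesis using s i kl by (simp add: Xv_nth tr_nth)
    next
      case False
      then have ml: "mk i (s - 1) < h" using s by (intro mk_less) simp
      have "share h w0 i (s - 1) = 0" using i s False by (intro share0) auto
      moreover have "mk i (s - 1) \<noteq> i - 1" by (rule mk_ne) (use i in auto)
      ultimately show ?thesis using s i kl False ml
        by (simp add: Xv_nth tr_nth um_mk mk_ne mod_simps add.commute)
    qed
  qed simp
qed

lemma sum_first: "(\<Sum>s<h. (if s = 0 then 1 else 0) * f s) = (f 0 :: nat)"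
  using h2 by (simp add: if_distrib[of "\<lambda>x. x * _"] cong: if_cong)

lemma Zf_key: "Zf i (Suc h) d = (snd d ! (i - 1)) mod q"
  using h2 by (simp add: Zf_def coefS_def sum_first Xv_nth)

lemma Zf_key': "Zf i (h + 1) d = (snd d ! (i - 1)) mod q"
  using Zf_key by simp

lemma edge_into_SS: "e \<in> E \<Longrightarrow> snd e = SS i \<Longrightarrow> e = (Src, SS i) \<and> 1 \<le> i \<and> i \<le> h"
  by (auto simp: ccn_edges_def)
lemma edge_into_AA: "e \<in> E \<Longrightarrow> snd e = AA j \<Longrightarrow> \<exists>i. e = (SS i, AA j) \<and> 1 \<le> i \<and> i \<le> h \<and> (i = j \<or> h < j \<and> j \<le> m)"
  by (auto simp: ccn_edges_def)
lemma edge_into_BB: "e \<in> E \<Longrightarrow> snd e = BB j \<Longrightarrow> e = (AA j, BB j) \<and> 1 \<le> j \<and> j \<le> m"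
  by (auto simp: ccn_edges_def)

lemma Sv_low: "j \<le> h \<Longrightarrow> Sv i j d = Xv i d"
  by (simp add: Sv_def saS_def Xv_def)

lemma sec_all:
  assumes ext: "\<And>j wl. h + 1 < j \<Longrightarrow> j \<le> m \<Longrightarrow> wl \<in> Wl \<Longrightarrow>
     \<exists>\<delta>. \<forall>kl\<in>Kl. \<forall>i. 1 \<le> i \<and> i \<le> h \<longrightarrow> Zf i j (wl, kl) = Zf i j (w0, tr q \<delta> kl)"
  and a: "a \<in> adversary_nodes m h" and wl: "wl \<in> Wl"
  shows "\<exists>\<pi>. inj_on \<pi> Kl \<and> \<pi> ` Kl \<subseteq> Kl \<and> (\<forall>kl\<in>Kl. \<forall>e\<in>E. snd e = a \<longrightarrow> X0 (wl, kl) e = X0 (w0, \<pi> kl) e)"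
proof -
  have Z: "\<exists>\<delta>. \<forall>kl\<in>Kl. \<forall>i. 1 \<le> i \<and> i \<le> h \<longrightarrow> Zf i j (wl, kl) = Zf i j (w0, tr q \<delta> kl)"
    if j: "h < j" "j \<le> m" for j
  proof (cases "j = h + 1")
    case True
    show ?thesis
    proof (intro exI[of _ "\<lambda>_. 0"] ballI allI impI)
      fix kl i assume kl: "kl \<in> Kl" and i: "1 \<le> i \<and> i \<le> h"
      have "i - 1 < h" using i by arith
      then have "tr q (\<lambda>_. 0) kl ! (i - 1) = kl ! (i - 1) mod q" using tr_nth[OF kl] by simp
      then show "Zf i j (wl, kl) = Zf i j (w0, tr q (\<lambda>_. 0) kl)"
        unfolding True Zf_key' by simp
    qed
  next
    case False then show ?thesis using ext[OF _ j(2) wl] j by simp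
  qed
  have goal: "\<exists>\<delta>. \<forall>kl\<in>Kl. \<forall>e\<in>E. snd e = a \<longrightarrow> X0 (wl, kl) e = X0 (w0, tr q \<delta> kl) e"
  proof -
    from a consider (S) i where "a = SS i" "1 \<le> i" "i \<le> h" | (A) j where "a = AA j" "1 \<le> j" "j \<le> m"
      | (B) j where "a = BB j" "1 \<le> j" "j \<le> m"
      unfolding adversary_nodes_def by auto
    then show ?thesis
    proof cases
      case (S i)
      obtain \<delta> where d: "\<forall>kl\<in>Kl. Xv i (wl, kl) = Xv i (w0, tr q \<delta> kl)" using sec_X S by blast
      show ?thesis
      proof (intro exI[of _ \<delta>] ballI impI)
        fix kl e assume "kl \<in> Kl" "e \<in> E" "snd e = a"
        then show "X0 (wl, kl) e = X0 (w0, tr q \<delta> kl) e"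
          using edge_into_SS[of e i] S d by (auto simp: X0_def)
      qed
    next
      case (A j)
      show ?thesis
      proof (cases "j \<le> h")
        case True
        obtain \<delta> where d: "\<forall>kl\<in>Kl. Xv j (wl, kl) = Xv j (w0, tr q \<delta> kl)" using sec_X A True by blast
        show ?thesis
        proof (intro exI[of _ \<delta>] ballI impI)
          fix kl e assume "kl \<in> Kl" "e \<in> E" "snd e = a"
          then show "X0 (wl, kl) e = X0 (w0, tr q \<delta> kl) e"
            using edge_into_AA[of e j] A d True by (auto simp: X0_def Sv_low)
        qed
      next
        case False
        then obtain \<delta> where d: "\<forall>kl\<in>Kl. \<forall>i. 1 \<le> i \<and> i \<le> h \<longrightarrow> Zf i j (wl, kl) = Zf i j (w0, tr q \<delta> kl)"
          using Z A by (meson not_le)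
        show ?thesis
        proof (intro exI[of _ \<delta>] ballI impI)
          fix kl e assume "kl \<in> Kl" "e \<in> E" "snd e = a"
          then show "X0 (wl, kl) e = X0 (w0, tr q \<delta> kl) e"
            using edge_into_AA[of e j] A d False by (auto simp: X0_def Sv_high)
        qed
      qed
    next
      case (B j)
      show ?thesis
      proof (cases "j \<le> h")
        case True
        obtain \<delta> where d: "\<forall>kl\<in>Kl. Xv j (wl, kl) = Xv j (w0, tr q \<delta> kl)" using sec_X B True by blast
        show ?thesis
        proof (intro exI[of _ \<delta>] ballI impI)
          fix kl e assume "kl \<in> Kl" "e \<in> E" "snd e = a"
          then show "X0 (wl, kl) e = X0 (w0, tr q \<delta> kl) e"
            using edge_into_BB[of e j] B d True by (auto simp: X0_def Yv_low)
        qed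
      next
        case False
        then obtain \<delta> where d: "\<forall>kl\<in>Kl. \<forall>i. 1 \<le> i \<and> i \<le> h \<longrightarrow> Zf i j (wl, kl) = Zf i j (w0, tr q \<delta> kl)"
          using Z B by (meson not_le)
        show ?thesis
        proof (intro exI[of _ \<delta>] ballI impI)
          fix kl e assume kl: "kl \<in> Kl" and "e \<in> E" "snd e = a"
          then have e: "e = (AA j, BB j)" using edge_into_BB[of e j] B by auto
          have "Yv j (wl, kl) = Yv j (w0, tr q \<delta> kl)"
            using False B d kl by (simp add: Yv_high)
          then show "X0 (wl, kl) e = X0 (w0, tr q \<delta> kl) e"
            using e by (simp add: X0_def)
        qed
      qed
    qed
  qed
  then show ?thesis using tr_inj tr_into by blast
qed


lemma Xv_key: "1 \<le> i \<Longrightarrow> i \<le> h \<Longrightarrow> kl \<in> Kl \<Longrightarrow> Xv i (wl, kl) ! 0 = kl ! (i - 1)"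
  using h2 by (simp add: Xv_nth Kl_nth)

lemma Xv_sh: "t < h - 1 \<Longrightarrow> Xv i (wl, kl) ! (Suc t) = (share h wl i t + kl ! mk i t) mod q"
  by (simp add: Xv_nth)

lemma dec_base:
  assumes wl: "wl \<in> Wl" "wl' \<in> Wl" and kl: "kl \<in> Kl" and i0: "1 \<le> i0" "i0 \<le> h"
  and X: "\<And>l. 1 \<le> l \<Longrightarrow> l \<le> h \<Longrightarrow> l \<noteq> i0 \<Longrightarrow> Xv l (wl, kl) = Xv l (wl', kl)"
  shows "wl = wl'"
proof -
  have sh: "share h wl l t mod q = share h wl' l t mod q"
    if l: "1 \<le> l" "l \<le> h" "l \<noteq> i0" and t: "t < h - 1" for l t
  proof -
    have "Xv l (wl, kl) ! (t + 1) = Xv l (wl', kl) ! (t + 1)" using X l by simp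
    then have "(share h wl l t + kl ! mk l t) mod q = (share h wl' l t + kl ! mk l t) mod q"
      using t by (simp add: Xv_sh)
    then show ?thesis by (rule add_mod_cancel)
  qed
  have c1: "wl ! (b * (h - 1) + t) = wl' ! (b * (h - 1) + t)"
    if b: "b < h - 1" "b + 1 \<noteq> i0" and t: "t < h - 1" for b t
  proof -
    have "share h wl (b + 1) t mod q = share h wl' (b + 1) t mod q" using sh[of "b+1" t] b t by simp
    moreover have bh: "b + 1 < h" using b by arith
    ultimately have "wl ! (b * (h - 1) + t) mod q = wl' ! (b * (h - 1) + t) mod q"
      unfolding share_def by simp
    moreover have "b * (h - 1) + t < (h - 1)^2" using idx2 b t by blast
    ultimately show ?thesis using Wl_nth wl by simp
  qed
  have c: "wl ! (b * (h - 1) + t) = wl' ! (b * (h - 1) + t)"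
    if b: "b < h - 1" and t: "t < h - 1" for b t
  proof (cases "b + 1 = i0")
    case False then show ?thesis using c1 b t by blast
  next
    case True
    then have hi: "h \<noteq> i0" using b by simp
    have "share h wl h t mod q = share h wl' h t mod q" using sh[of h t] hi h2 t by simp
    then have S: "(\<Sum>b<h - 1. wl ! (b * (h - 1) + t)) mod q = (\<Sum>b<h - 1. wl' ! (b * (h - 1) + t)) mod q"
      by (simp add: share_def)
    have bi: "b \<in> {..<h - 1}" using b by simp
    have R: "(\<Sum>b'\<in>{..<h - 1} - {b}. wl ! (b' * (h - 1) + t)) = (\<Sum>b'\<in>{..<h - 1} - {b}. wl' ! (b' * (h - 1) + t))"
      using c1 t True by (intro sum.cong) auto
    have "(wl ! (b * (h - 1) + t) + (\<Sum>b'\<in>{..<h - 1} - {b}. wl ! (b' * (h - 1) + t))) mod q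
        = (wl' ! (b * (h - 1) + t) + (\<Sum>b'\<in>{..<h - 1} - {b}. wl ! (b' * (h - 1) + t))) mod q"
      using S unfolding sum.remove[OF finite_lessThan bi] R .
    then have "wl ! (b * (h - 1) + t) mod q = wl' ! (b * (h - 1) + t) mod q" by (rule add_mod_cancel)
    moreover have "b * (h - 1) + t < (h - 1)^2" using idx2 b t by blast
    ultimately show ?thesis using Wl_nth wl by simp
  qed
  show ?thesis
  proof (rule nth_equalityI)
    show "length wl = length wl'" using wl unfolding Wl_def by simp
    fix n assume "n < length wl"
    then have n: "n < (h - 1) * (h - 1)" using wl unfolding Wl_def by (simp add: power2_eq_square)
    have h1: "h - 1 > 0" using h2 by simp
    have "n div (h - 1) < h - 1" using n h1 by (simp add: div_less_iff_less_mult)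
    moreover have "n mod (h - 1) < h - 1" using h1 by simp
    ultimately have "wl ! (n div (h - 1) * (h - 1) + n mod (h - 1)) = wl' ! (n div (h - 1) * (h - 1) + n mod (h - 1))"
      by (rule c)
    then show "wl ! n = wl' ! n" using div_mult_mod_eq[of n "h - 1"] by simp
  qed
qed

lemma keys_eq: "kl \<in> Kl \<Longrightarrow> kl' \<in> Kl \<Longrightarrow> (\<And>t. t < h \<Longrightarrow> kl ! t = kl' ! t) \<Longrightarrow> kl = kl'"
  by (rule nth_equalityI) (auto simp: Kl_def)

lemma dec_small:
  assumes T: "T \<in> receiver_sets m h" "T \<subseteq> {1..h+1}"
  and d: "fst d \<in> Wl" "snd d \<in> Kl" "fst d' \<in> Wl" "snd d' \<in> Kl"
  and Y: "\<forall>j\<in>T. Yv j d = Yv j d'"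
  shows "fst d = fst d'"
proof -
  obtain wl kl wl' kl' where dd: "d = (wl, kl)" "d' = (wl', kl')" by (cases d, cases d') auto
  have Tm: "T \<subseteq> {1..m}" "card T = h" using T by (auto simp: receiver_sets_def)
  have fT: "finite T" using T(2) finite_subset by blast
  have Xeq: "Xv l d = Xv l d'" if "l \<in> T" "l \<le> h" for l
  proof -
    have "1 \<le> l" using that T(2) by auto
    moreover have "Yv l d = Yv l d'" using Y that by blast
    ultimately show ?thesis using Yv_low[of l] that by simp
  qed
  show ?thesis
  proof (cases "h + 1 \<in> T")
    case True
    have hm: "h + 1 \<le> m" using True Tm by auto
    have "Yv (h + 1) d = Yv (h + 1) d'" using Y True by blast
    then have "\<And>t. t < h \<Longrightarrow> Zf (t + 1) (h + 1) d = Zf (t + 1) (h + 1) d'"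
      using hm by (simp add: Yv_high)
    then have "\<And>t. t < h \<Longrightarrow> kl ! t mod q = kl' ! t mod q" using d dd by (simp add: Zf_key)
    then have "\<And>t. t < h \<Longrightarrow> kl ! t = kl' ! t" using d dd Kl_nth[of kl] Kl_nth[of kl'] by simp
    then have k: "kl = kl'" using keys_eq d dd by simp
    have TI: "T = insert (h + 1) ({1..h} \<inter> T)" using True T(2) by auto
    have cI: "card ({1..h} \<inter> T) = h - 1" using Tm(2) fT TI
    proof -
      have "h + 1 \<notin> {1..h} \<inter> T" by simp
      then have "card T = Suc (card ({1..h} \<inter> T))" using TI fT
        by (metis card_insert_disjoint finite_Int)
      then show ?thesis using Tm(2) by simp
    qed
    have "card ({1..h} - T) = card {1..h} - card ({1..h} \<inter> T)"
      by (simp add: card_Diff_subset_Int Diff_Int2 Int_commute)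
    then have "card ({1..h} - T) = 1" using cI h2 by simp
    then obtain i0 where i0: "{1..h} - T = {i0}" by (meson card_1_singletonE)
    have i0r: "1 \<le> i0" "i0 \<le> h" using i0 by auto
    have "Xv l (wl, kl) = Xv l (wl', kl)" if l: "1 \<le> l" "l \<le> h" "l \<noteq> i0" for l
    proof -
      have "l \<notin> {1..h} - T" using i0 l by simp
      then have "l \<in> T" using l by simp
      then have "Xv l d = Xv l d'" using Xeq l by simp
      then show ?thesis using dd k by simp
    qed
    then have "wl = wl'" using dec_base[OF _ _ _ i0r] d dd by simp
    then show ?thesis using dd by simp
  next
    case False
    have "T \<subseteq> {1..h}"
    proof
      fix x assume x: "x \<in> T"
      then have "x \<in> {1..h+1}" using T(2) by blast
      then show "x \<in> {1..h}" using False x by (cases "x = h + 1") auto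
    qed
    then have TT: "T = {1..h}" using Tm(2) by (intro card_subset_eq) auto
    have "\<And>t. t < h \<Longrightarrow> kl ! t = kl' ! t"
    proof -
      fix t assume t: "t < h"
      have "Xv (t + 1) d ! 0 = Xv (t + 1) d' ! 0" using Xeq[of "t+1"] TT t by simp
      then show "kl ! t = kl' ! t" using Xv_key[of "t+1"] t d dd by simp
    qed
    then have k: "kl = kl'" using keys_eq d dd by simp
    have "Xv l (wl, kl) = Xv l (wl', kl)" if l: "1 \<le> l" "l \<le> h" for l
    proof -
      have "l \<in> T" using l TT by simp
      then have "Xv l d = Xv l d'" using Xeq l by simp
      then show ?thesis using dd k by simp
    qed
    then have "wl = wl'" using dec_base[of wl wl' kl h] d dd h2 by simp
    then show ?thesis using dd by simp
  qed
qed

end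

lemma rate_eq: "h \<ge> 1 \<Longrightarrow> real ((h - 1)^2) / real h = (real h - 1)^2 / real h"
  by (simp add: of_nat_diff)

lemma field2: "is_field_size 2"
  unfolding is_field_size_def by (rule exI[of _ 2], rule exI[of _ 1]) simp

lemma case_ii:
  assumes h: "h \<ge> 2"
  shows "\<exists>q N P. is_field_size q \<and> secure_protocol (h + 1) h q N P
                 \<and> secrecy_rate (h + 1) h q N P = (real h - 1)^2 / real h"
proof -
  interpret sch "h + 1" h 2 "\<lambda>_ _ _. 0" using h by unfold_locales auto
  have "secure_protocol (h + 1) h 2 h P \<and> secrecy_rate (h + 1) h 2 h P = real ((h - 1)^2) / real h"
  proof (rule scheme_secure)
    fix T d d' assume "T \<in> receiver_sets (h + 1) h" "fst d \<in> Wl" "snd d \<in> Kl" "fst d' \<in> Wl" "snd d' \<in> Kl"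
      "\<forall>j\<in>T. Yv j d = Yv j d'"
    moreover have "T \<subseteq> {1..h+1}" using \<open>T \<in> receiver_sets (h + 1) h\<close> by (simp add: receiver_sets_def)
    ultimately show "fst d = fst d'" using dec_small by blast
  next
    fix a wl assume "a \<in> adversary_nodes (h + 1) h" "wl \<in> Wl"
    then show "\<exists>\<pi>. inj_on \<pi> Kl \<and> \<pi> ` Kl \<subseteq> Kl \<and>
        (\<forall>kl\<in>Kl. \<forall>e\<in>E. snd e = a \<longrightarrow> X0 (wl, kl) e = X0 (replicate ((h - 1)^2) 0, \<pi> kl) e)"
      by (intro sec_all) auto
  qed
  then show ?thesis using field2 rate_eq h by (intro exI[of _ 2] exI[of _ h] exI[of _ P]) auto
qed

lemma modeq_dvd: "(A::nat) mod p = B mod p \<Longrightarrow> int p dvd int A - int B"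
  by (metis mod_eq_dvd_iff of_nat_mod)

lemma dvd_small_eq: "(a::nat) < p \<Longrightarrow> b < p \<Longrightarrow> int p dvd int a - int b \<Longrightarrow> a = b"
proof (rule ccontr)
  assume a: "a < p" "b < p" "int p dvd int a - int b" "a \<noteq> b"
  then have "\<bar>int p\<bar> \<le> \<bar>int a - int b\<bar>" by (intro dvd_imp_le_int) auto
  then show False using a by linarith
qed

lemma prime_cancel: "prime (p::nat) \<Longrightarrow> int p dvd c * x \<Longrightarrow> c \<noteq> 0 \<Longrightarrow> \<bar>c\<bar> < int p \<Longrightarrow> int p dvd x"
proof -
  assume a: "prime p" "int p dvd c * x" "c \<noteq> 0" "\<bar>c\<bar> < int p"
  have pi: "prime (int p)" using a(1) by simp
  have "\<not> int p dvd c"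
  proof
    assume "int p dvd c"
    then have "\<bar>int p\<bar> \<le> \<bar>c\<bar>" using a(3) by (intro dvd_imp_le_int) auto
    then show False using a(4) by simp
  qed
  then show ?thesis using a(2) pi by (simp add: prime_dvd_mult_iff)
qed

lemma sum2: "(\<Sum>s<(2::nat). f s) = f 0 + (f 1 :: nat)"
  by (simp add: numeral_2_eq_2)

lemma upt2: "[0..<2] = [0, 1::nat]"
  by (simp add: numeral_2_eq_2)

lemma mod_inner: "(a + j * (x mod p)) mod p = (a + j * x) mod (p::nat)"
  by (metis mod_add_right_eq mod_mult_right_eq)

definition ext1 :: "nat \<Rightarrow> nat \<Rightarrow> nat \<Rightarrow> nat" where
  "ext1 j i s = (if i = 1 then (if s = 0 then 1 else j) else (if s = 0 then 1 else 0))"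

locale c1 =
  fixes m p :: nat
  assumes m4: "m \<ge> 4" and pp: "prime p" and pm: "p > m"
begin

lemma p1: "p > 1" using pp prime_gt_1_nat by blast

sublocale sch m 2 p ext1 using p1 by unfold_locales auto

lemma X1: "Xv (Suc 0) (wl, kl) = [kl ! 0 mod p, (wl ! 0 + kl ! 1) mod p]"
  by (rule nth_equalityI) (auto simp: Xv_nth share_def mk_def less_2_cases_iff)

lemma X2: "Xv (Suc (Suc 0)) (wl, kl) = [kl ! 1 mod p, (wl ! 0 + kl ! 0) mod p]"
  by (rule nth_equalityI) (auto simp: Xv_nth share_def mk_def less_2_cases_iff)

lemma Z1: "j \<noteq> 3 \<Longrightarrow> Zf (Suc 0) j (wl, kl) = (kl ! 0 + j * (wl ! 0 + kl ! 1)) mod p"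
  by (simp add: Zf_def coefS_def ext1_def sum2 X1 mod_simps mod_inner)

lemma Z2: "j \<noteq> 3 \<Longrightarrow> Zf (Suc (Suc 0)) j (wl, kl) = kl ! 1 mod p"
  by (simp add: Zf_def coefS_def ext1_def sum2 X2 mod_simps)

lemma Yhigh: "3 < j \<Longrightarrow> j \<le> m \<Longrightarrow> Yv j (wl, kl) = [(kl ! 0 + j * (wl ! 0 + kl ! 1)) mod p, kl ! 1 mod p]"
  by (simp add: Yv_high upt2 Z1 Z2)

lemma Y3: "Yv 3 (wl, kl) = [kl ! 0 mod p, kl ! 1 mod p]"
proof -
  have "Yv (2 + 1) (wl, kl) = map (\<lambda>t. Zf (t + 1) (2 + 1) (wl, kl)) [0..<2]"
    using m4 by (intro Yv_high) auto
  then show ?thesis using Zf_key[of "Suc 0" "(wl, kl)", simplified] Zf_key[of "Suc (Suc 0)" "(wl, kl)", simplified]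
    by (simp add: upt2)
qed

lemma ext_sec:
  assumes j: "2 + 1 < j" "j \<le> m" and wl: "wl \<in> Wl"
  shows "\<exists>\<delta>. \<forall>kl\<in>Kl. \<forall>i. 1 \<le> i \<and> i \<le> 2 \<longrightarrow> Zf i j (wl, kl) = Zf i j (w0, tr p \<delta> kl)"
proof (intro exI[of _ "\<lambda>c. if c = 0 then j * wl ! 0 else 0"] ballI allI impI)
  fix kl and i :: nat assume kl: "kl \<in> Kl" and i: "1 \<le> i \<and> i \<le> 2"
  have j3: "j \<noteq> 3" using j by simp
  have t0: "tr p (\<lambda>c. if c = 0 then j * wl ! 0 else 0) kl ! 0 = (kl ! 0 + j * wl ! 0) mod p"
    using tr_nth[OF kl, of 0] by simp
  have t1: "tr p (\<lambda>c. if c = 0 then j * wl ! 0 else 0) kl ! 1 = kl ! 1 mod p"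
    using tr_nth[OF kl, of 1] by simp
  have w0: "w0 ! 0 = (0::nat)" by simp
  have k1: "kl ! 1 mod p = kl ! 1" using Kl_nth[OF kl, of 1] by simp
  from i have "i = 1 \<or> i = 2" by auto
  then show "Zf i j (wl, kl) = Zf i j (w0, tr p (\<lambda>c. if c = 0 then j * wl ! 0 else 0) kl)"
  proof
    assume i1: "i = 1"
    have "Zf (Suc 0) j (wl, kl) = Zf (Suc 0) j (w0, tr p (\<lambda>c. if c = 0 then j * wl ! 0 else 0) kl)"
      unfolding Z1[OF j3] t0 t1 k1
      by (simp add: mod_simps algebra_simps mod_inner)
    then show ?thesis using i1 by simp
  next
    assume i2: "i = 2"
    have "Zf (Suc (Suc 0)) j (wl, kl) = Zf (Suc (Suc 0)) j (w0, tr p (\<lambda>c. if c = 0 then j * wl ! 0 else 0) kl)"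
      unfolding Z2[OF j3] t1 by simp
    then show ?thesis using i2 by (simp add: numeral_2_eq_2)
  qed
qed


lemma Wl1: "wl \<in> Wl \<Longrightarrow> wl = [wl ! 0]"
  unfolding Wl_def by (cases wl) auto

lemma pair_dec:
  assumes j: "3 < j" "j \<le> m" and l: "1 \<le> l" "l \<le> m" "l \<noteq> j"
  and d: "wl \<in> Wl" "kl \<in> Kl" "wl' \<in> Wl" "kl' \<in> Kl"
  and Yj: "Yv j (wl, kl) = Yv j (wl', kl')" and Yl: "Yv l (wl, kl) = Yv l (wl', kl')"
  shows "wl = wl'"
proof -
  define w k1 k2 w' k1' k2' where "w = wl ! 0" "k1 = kl ! 0" "k2 = kl ! 1" "w' = wl' ! 0" "k1' = kl' ! 0" "k2' = kl' ! 1"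
  have lt: "w < p" "k1 < p" "k2 < p" "w' < p" "k1' < p" "k2' < p"
    using d Wl_nth[of wl 0] Wl_nth[of wl' 0] Kl_nth[of kl 0] Kl_nth[of kl 1] Kl_nth[of kl' 0] Kl_nth[of kl' 1]
    unfolding w_k1_k2_w'_k1'_k2'_def by auto
  have E: "(k1 + j * (w + k2)) mod p = (k1' + j * (w' + k2')) mod p" "k2 mod p = k2' mod p"
    using Yj unfolding Yhigh[OF j] w_k1_k2_w'_k1'_k2'_def by auto
  have k2: "k2 = k2'" using E(2) lt by simp
  have D1: "int p dvd (int k1 - int k1') + int j * (int w - int w')"
  proof -
    have "int p dvd int (k1 + j * (w + k2)) - int (k1' + j * (w' + k2'))" using E(1) by (rule modeq_dvd)
    also have "int (k1 + j * (w + k2)) - int (k1' + j * (w' + k2')) = (int k1 - int k1') + int j * (int w - int w')"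
      using k2 by (simp add: algebra_simps)
    finally show ?thesis .
  qed
  have fin: "w = w'" if "int p dvd int w - int w'" using dvd_small_eq[OF lt(1) lt(4) that] .
  have "w = w'"
  proof -
    consider "l = 1" | "l = 2" | "l = 3" | "3 < l" using l by linarith
    then show ?thesis
    proof cases
      case 1
      have "Yv 1 (wl, kl) = Xv 1 (wl, kl)" "Yv 1 (wl', kl') = Xv 1 (wl', kl')" by (simp_all add: Yv_low)
      then have "(w + k2) mod p = (w' + k2') mod p"
        using Yl 1 X1[of wl kl] X1[of wl' kl'] unfolding w_k1_k2_w'_k1'_k2'_def by simp
      then have "w mod p = w' mod p" using k2 add_mod_cancel[of w k2 p w'] by simp
      then show ?thesis using lt by simp
    next
      case 2
      have "Yv 2 (wl, kl) = Xv 2 (wl, kl)" "Yv 2 (wl', kl') = Xv 2 (wl', kl')" by (simp_all add: Yv_low)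
      then have "(w + k1) mod p = (w' + k1') mod p"
        using Yl 2 X2[of wl kl] X2[of wl' kl'] unfolding w_k1_k2_w'_k1'_k2'_def by (simp add: numeral_2_eq_2)
      then have "int p dvd int (w + k1) - int (w' + k1')" by (rule modeq_dvd)
      then have D2: "int p dvd (int w - int w') + (int k1 - int k1')" by (simp add: algebra_simps)
      have "int p dvd ((int k1 - int k1') + int j * (int w - int w')) - ((int w - int w') + (int k1 - int k1'))"
        using D1 D2 by (rule dvd_diff)
      also have "\<dots> = (int j - 1) * (int w - int w')" by (simp add: algebra_simps)
      finally have "int p dvd (int j - 1) * (int w - int w')" .
      then have "int p dvd int w - int w'" by (rule prime_cancel[OF pp]) (use j pm in auto)
      then show ?thesis by (rule fin)
    next
      case 3
      have "Yv 3 (wl, kl) = Yv 3 (wl', kl')" using Yl 3 by simp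
      then have "k1 mod p = k1' mod p" unfolding Y3 w_k1_k2_w'_k1'_k2'_def by simp
      then have "k1 = k1'" using lt by simp
      then have "int p dvd int j * (int w - int w')" using D1 by simp
      then have "int p dvd int w - int w'" by (rule prime_cancel[OF pp]) (use j pm in auto)
      then show ?thesis by (rule fin)
    next
      case 4
      have "(k1 + l * (w + k2)) mod p = (k1' + l * (w' + k2')) mod p"
        using Yl unfolding Yhigh[OF 4 l(2)] w_k1_k2_w'_k1'_k2'_def by simp
      then have "int p dvd int (k1 + l * (w + k2)) - int (k1' + l * (w' + k2'))" by (rule modeq_dvd)
      then have D3: "int p dvd (int k1 - int k1') + int l * (int w - int w')" using k2 by (simp add: algebra_simps)
      have "int p dvd ((int k1 - int k1') + int j * (int w - int w')) - ((int k1 - int k1') + int l * (int w - int w'))"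
        using D1 D3 by (rule dvd_diff)
      also have "\<dots> = (int j - int l) * (int w - int w')" by (simp add: algebra_simps)
      finally have "int p dvd (int j - int l) * (int w - int w')" .
      then have "int p dvd int w - int w'" by (rule prime_cancel[OF pp]) (use j pm l 4 in auto)
      then show ?thesis by (rule fin)
    qed
  qed
  then show ?thesis using Wl1[OF d(1)] Wl1[OF d(3)] unfolding w_k1_k2_w'_k1'_k2'_def by simp
qed

end

context c1
begin

lemma c1_secure: "secure_protocol m 2 p 2 P \<and> secrecy_rate m 2 p 2 P = real ((2 - 1)^2) / real 2"
proof (rule scheme_secure)
  fix T d d' assume T: "T \<in> receiver_sets m 2" and d: "fst d \<in> Wl" "snd d \<in> Kl" "fst d' \<in> Wl" "snd d' \<in> Kl"
    and Y: "\<forall>j\<in>T. Yv j d = Yv j d'"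
  have Tm: "T \<subseteq> {1..m}" "card T = 2" using T by (auto simp: receiver_sets_def)
  show "fst d = fst d'"
  proof (cases "T \<subseteq> {1..2+1}")
    case True show ?thesis using dec_small[OF T True d Y] .
  next
    case False
    then obtain j where j0: "j \<in> T" "j \<notin> {1..2+1}" by blast
    then have jm: "j \<in> {1..m}" using Tm by blast
    then have j: "j \<in> T" "3 < j" using j0 by auto
    have "T - {j} \<noteq> {}"
    proof
      assume "T - {j} = {}"
      then have "T \<subseteq> {j}" by blast
      then have "card T \<le> card {j}" by (intro card_mono) auto
      then have "card T \<le> 1" by simp
      then show False using Tm by simp
    qed
    then obtain l where l: "l \<in> T" "l \<noteq> j" by blast
    obtain wl kl wl' kl' where dd: "d = (wl, kl)" "d' = (wl', kl')" by (cases d, cases d') auto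
    have lm: "l \<in> {1..m}" using l Tm by blast
    have "Yv j (wl, kl) = Yv j (wl', kl')" "Yv l (wl, kl) = Yv l (wl', kl')" using Y j l dd by auto
    moreover have "wl \<in> Wl" "kl \<in> Kl" "wl' \<in> Wl" "kl' \<in> Kl" using d dd by auto
    ultimately have "wl = wl'" using pair_dec[of j l wl kl wl' kl'] j(2) jm lm l(2) by simp
    then show ?thesis using dd by simp
  qed
next
  fix a wl assume "a \<in> adversary_nodes m 2" "wl \<in> Wl"
  then show "\<exists>\<pi>. inj_on \<pi> Kl \<and> \<pi> ` Kl \<subseteq> Kl \<and>
      (\<forall>kl\<in>Kl. \<forall>e\<in>E. snd e = a \<longrightarrow> X0 (wl, kl) e = X0 (replicate ((2 - 1)^2) 0, \<pi> kl) e)"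
    by (intro sec_all ext_sec) auto
qed

end

lemma case_i4:
  assumes m: "m \<ge> 4"
  shows "\<exists>q N P. is_field_size q \<and> secure_protocol m 2 q N P
                 \<and> secrecy_rate m 2 q N P = (real 2 - 1)^2 / real 2"
proof -
  obtain p :: nat where p: "prime p" "p > m" using bigger_prime by blast
  interpret c1 m p using m p by unfold_locales auto
  have f: "is_field_size p" unfolding is_field_size_def using p by (intro exI[of _ p] exI[of _ 1]) simp
  show ?thesis using c1_secure f rate_eq[of 2] by (intro exI[of _ p] exI[of _ 2] exI[of _ P]) simp
qed

lemma par_iff: "(x::nat) mod 2 = y mod 2 \<longleftrightarrow> (even x \<longleftrightarrow> even y)"
  by presburger

lemma sum3: "(\<Sum>s<(3::nat). f s) = f 0 + f 1 + (f 2 :: nat)"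
  by (simp add: numeral_3_eq_3 numeral_2_eq_2)

lemma list3: "length l = 3 \<Longrightarrow> l = [l ! 0, l ! 1, l ! 2]"
  by (cases l rule: rev_cases; simp; cases "butlast l" rule: rev_cases; auto simp: numeral_3_eq_3 nth_append)
     (metis Suc_length_conv length_0_conv nth_Cons_0 nth_Cons_Suc numeral_2_eq_2 One_nat_def)

lemma upt3: "[0..<3] = [0, 1, 2::nat]"
  by (simp add: numeral_3_eq_3)

definition ext3 :: "nat \<Rightarrow> nat \<Rightarrow> nat \<Rightarrow> nat" where
  "ext3 j i s = (if j = 5 then (if i = 1 then [1,0,1] ! s else if i = 2 then [0,1,0] ! s else [1,1,1] ! s)
                 else (if i = 1 then [1,1,1] ! s else if i = 2 then [0,0,1] ! s else [1,1,0] ! s))"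

locale c3 =
  fixes m :: nat
  assumes m4: "m \<ge> 4" and m6: "m \<le> 6"
begin

sublocale sch m 3 2 ext3 by unfold_locales auto

lemma Y1: "Yv 1 (wl, kl) = [kl ! 0 mod 2, (wl ! 0 + kl ! 1) mod 2, (wl ! 1 + kl ! 2) mod 2]"
  by (subst Yv_low, simp, simp, subst list3, simp) (simp add: Xv_nth share_def mk_def sum2; (simp add: numeral_2_eq_2)?)

lemma Y2: "Yv 2 (wl, kl) = [kl ! 1 mod 2, (wl ! 2 + kl ! 0) mod 2, (wl ! 3 + kl ! 2) mod 2]"
  by (subst Yv_low, simp, simp, subst list3, simp) (simp add: Xv_nth share_def mk_def sum2; (simp add: numeral_2_eq_2)?)

lemma Y3: "Yv 3 (wl, kl) = [kl ! 2 mod 2, (wl ! 0 + wl ! 2 + kl ! 0) mod 2, (wl ! 1 + wl ! 3 + kl ! 1) mod 2]"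
  by (subst Yv_low, simp, simp, subst list3, simp) (simp add: Xv_nth share_def mk_def sum2; (simp add: numeral_2_eq_2)?)

lemma Y4: "Yv 4 (wl, kl) = [kl ! 0 mod 2, kl ! 1 mod 2, kl ! 2 mod 2]"
proof -
  have "Yv (3 + 1) (wl, kl) = map (\<lambda>t. Zf (t + 1) (3 + 1) (wl, kl)) [0..<3]"
    using m4 by (intro Yv_high) auto
  then show ?thesis using Zf_key[of _ "(wl, kl)", simplified] by (simp add: upt3)
qed


lemma X1: "Xv 1 (wl, kl) = [kl ! 0 mod 2, (wl ! 0 + kl ! 1) mod 2, (wl ! 1 + kl ! 2) mod 2]"
  using Y1 Yv_low[of 1] by simp
lemma X2: "Xv 2 (wl, kl) = [kl ! 1 mod 2, (wl ! 2 + kl ! 0) mod 2, (wl ! 3 + kl ! 2) mod 2]"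
  using Y2 Yv_low[of 2] by simp
lemma X3: "Xv 3 (wl, kl) = [kl ! 2 mod 2, (wl ! 0 + wl ! 2 + kl ! 0) mod 2, (wl ! 1 + wl ! 3 + kl ! 1) mod 2]"
  using Y3 Yv_low[of 3] by simp

lemma X1s: "Xv (Suc 0) (wl, kl) = [kl ! 0 mod 2, (wl ! 0 + kl ! 1) mod 2, (wl ! 1 + kl ! 2) mod 2]"
  using X1 by simp
lemma X2s: "Xv (Suc (Suc 0)) (wl, kl) = [kl ! 1 mod 2, (wl ! 2 + kl ! 0) mod 2, (wl ! 3 + kl ! 2) mod 2]"
  using X2 by (simp add: numeral_2_eq_2)

lemma Z: "Zf i j d = (\<Sum>s<3. coefS 3 ext3 j i s * (Xv i d ! s)) mod 2"
  by (simp add: Zf_def)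

lemma Z15: "Zf 1 5 (wl, kl) = (kl ! 0 + wl ! 1 + kl ! 2) mod 2"
  by (simp add: Z coefS_def ext3_def sum3 X1 X1s par_iff even_add; argo?)
lemma Z25: "Zf 2 5 (wl, kl) = (wl ! 2 + kl ! 0) mod 2"
  by (simp add: Z coefS_def ext3_def sum3 X2 X2s par_iff even_add; argo?)
lemma Z35: "Zf 3 5 (wl, kl) = (kl ! 2 + wl ! 0 + wl ! 2 + kl ! 0 + wl ! 1 + wl ! 3 + kl ! 1) mod 2"
  by (simp add: Z coefS_def ext3_def sum3 X3 X3 par_iff even_add; argo?)
lemma Z16: "Zf 1 6 (wl, kl) = (kl ! 0 + wl ! 0 + kl ! 1 + wl ! 1 + kl ! 2) mod 2"
  by (simp add: Z coefS_def ext3_def sum3 X1 X1s par_iff even_add; argo?)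
lemma Z26: "Zf 2 6 (wl, kl) = (wl ! 3 + kl ! 2) mod 2"
  by (simp add: Z coefS_def ext3_def sum3 X2 X2s par_iff even_add; argo?)
lemma Z36: "Zf 3 6 (wl, kl) = (kl ! 2 + wl ! 0 + wl ! 2 + kl ! 0) mod 2"
  by (simp add: Z coefS_def ext3_def sum3 X3 X3 par_iff even_add; argo?)

lemma Zs1: "Zf (Suc 0) j d = Zf 1 j d" by simp
lemma Zs2: "Zf (Suc (Suc 0)) j d = Zf 2 j d" by (simp add: numeral_2_eq_2)

lemma Y5: "5 \<le> m \<Longrightarrow> Yv 5 (wl, kl) = [(kl ! 0 + wl ! 1 + kl ! 2) mod 2, (wl ! 2 + kl ! 0) mod 2,
    (kl ! 2 + wl ! 0 + wl ! 2 + kl ! 0 + wl ! 1 + wl ! 3 + kl ! 1) mod 2]"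
  by (simp add: Yv_high upt3 Zs2 Z15[unfolded One_nat_def] Z25 Z35)
lemma Y6: "6 \<le> m \<Longrightarrow> Yv 6 (wl, kl) = [(kl ! 0 + wl ! 0 + kl ! 1 + wl ! 1 + kl ! 2) mod 2,
    (wl ! 3 + kl ! 2) mod 2, (kl ! 2 + wl ! 0 + wl ! 2 + kl ! 0) mod 2]"
  by (simp add: Yv_high upt3 Zs2 Z16[unfolded One_nat_def] Z26 Z36)

lemma w0_nth: "n < 4 \<Longrightarrow> w0 ! n = 0"
  by simp

lemma tr_nth3: "kl \<in> Kl \<Longrightarrow> tr 2 (\<lambda>c. [x, y, z] ! c) kl = [(kl ! 0 + x) mod 2, (kl ! 1 + y) mod 2, (kl ! 2 + z) mod 2]"
  by (subst list3) (simp_all add: tr_def Kl_def)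

lemma sec5: assumes "5 \<le> m" shows "\<exists>\<delta>. \<forall>kl\<in>Kl. \<forall>i. 1 \<le> i \<and> i \<le> 3 \<longrightarrow> Zf i 5 (wl, kl) = Zf i 5 (w0, tr 2 \<delta> kl)"
proof (intro exI[of _ "\<lambda>c. [wl ! 2, wl ! 0 + wl ! 2 + wl ! 3, wl ! 1 + wl ! 2] ! c"] ballI allI impI)
  fix kl and i :: nat assume kl: "kl \<in> Kl" and i: "1 \<le> i \<and> i \<le> 3"
  let ?t = "tr 2 (\<lambda>c. [wl ! 2, wl ! 0 + wl ! 2 + wl ! 3, wl ! 1 + wl ! 2] ! c) kl"
  have T: "?t = [(kl ! 0 + ([wl ! 2, wl ! 0 + wl ! 2 + wl ! 3, wl ! 1 + wl ! 2] ! 0)) mod 2, (kl ! 1 + ([wl ! 2, wl ! 0 + wl ! 2 + wl ! 3, wl ! 1 + wl ! 2] ! 1)) mod 2, (kl ! 2 + ([wl ! 2, wl ! 0 + wl ! 2 + wl ! 3, wl ! 1 + wl ! 2] ! 2)) mod 2]"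
    using tr_nth3[OF kl] by simp
  have W: "w0 ! 0 = 0" "w0 ! 1 = 0" "w0 ! 2 = 0" "w0 ! 3 = 0" by simp_all
  have A: "Zf 1 5 (wl, kl) = Zf 1 5 (w0, ?t)"
    unfolding Z15 T W by (simp add: par_iff even_add; argo?)
  have B: "Zf 2 5 (wl, kl) = Zf 2 5 (w0, ?t)"
    unfolding Z25 T W by (simp add: par_iff even_add; argo?)
  have C: "Zf 3 5 (wl, kl) = Zf 3 5 (w0, ?t)"
    unfolding Z35 T W by (simp add: par_iff even_add; argo?)
  from i have "i = 1 \<or> i = 2 \<or> i = 3" by auto
  then show "Zf i 5 (wl, kl) = Zf i 5 (w0, ?t)" using A B C by auto
qed

lemma sec6: assumes "6 \<le> m" shows "\<exists>\<delta>. \<forall>kl\<in>Kl. \<forall>i. 1 \<le> i \<and> i \<le> 3 \<longrightarrow> Zf i 6 (wl, kl) = Zf i 6 (w0, tr 2 \<delta> kl)"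
proof (intro exI[of _ "\<lambda>c. [wl ! 0 + wl ! 2 + wl ! 3, wl ! 1 + wl ! 2, wl ! 3] ! c"] ballI allI impI)
  fix kl and i :: nat assume kl: "kl \<in> Kl" and i: "1 \<le> i \<and> i \<le> 3"
  let ?t = "tr 2 (\<lambda>c. [wl ! 0 + wl ! 2 + wl ! 3, wl ! 1 + wl ! 2, wl ! 3] ! c) kl"
  have T: "?t = [(kl ! 0 + ([wl ! 0 + wl ! 2 + wl ! 3, wl ! 1 + wl ! 2, wl ! 3] ! 0)) mod 2, (kl ! 1 + ([wl ! 0 + wl ! 2 + wl ! 3, wl ! 1 + wl ! 2, wl ! 3] ! 1)) mod 2, (kl ! 2 + ([wl ! 0 + wl ! 2 + wl ! 3, wl ! 1 + wl ! 2, wl ! 3] ! 2)) mod 2]"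
    using tr_nth3[OF kl] by simp
  have W: "w0 ! 0 = 0" "w0 ! 1 = 0" "w0 ! 2 = 0" "w0 ! 3 = 0" by simp_all
  have A: "Zf 1 6 (wl, kl) = Zf 1 6 (w0, ?t)"
    unfolding Z16 T W by (simp add: par_iff even_add; argo?)
  have B: "Zf 2 6 (wl, kl) = Zf 2 6 (w0, ?t)"
    unfolding Z26 T W by (simp add: par_iff even_add; argo?)
  have C: "Zf 3 6 (wl, kl) = Zf 3 6 (w0, ?t)"
    unfolding Z36 T W by (simp add: par_iff even_add; argo?)
  from i have "i = 1 \<or> i = 2 \<or> i = 3" by auto
  then show "Zf i 6 (wl, kl) = Zf i 6 (w0, ?t)" using A B C by auto
qed

lemma wl_par: assumes "wl \<in> Wl" "wl' \<in> Wl"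
  and "even (wl ! 0) = even (wl' ! 0)" "even (wl ! 1) = even (wl' ! 1)"
      "even (wl ! 2) = even (wl' ! 2)" "even (wl ! 3) = even (wl' ! 3)"
  shows "wl = wl'"
proof (rule nth_equalityI)
  show "length wl = length wl'" using assms(1,2) unfolding Wl_def by simp
  fix n assume "n < length wl"
  then have n: "n < 4" using assms(1) unfolding Wl_def by simp
  have lt: "wl ! n < 2" "wl' ! n < 2" using Wl_nth assms(1,2) n by auto
  from n have "n = 0 \<or> n = 1 \<or> n = 2 \<or> n = 3" by auto
  then have "even (wl ! n) = even (wl' ! n)" using assms(3-6) by auto
  then show "wl ! n = wl' ! n" using lt by presburger
qed

lemma R125: assumes m: "5 \<le> m" and Y: "Yv 1 (wl, kl) = Yv 1 (wl', kl')" "Yv 2 (wl, kl) = Yv 2 (wl', kl')" "Yv 5 (wl, kl) = Yv 5 (wl', kl')"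
  shows "even (wl ! 0) = even (wl' ! 0) \<and> even (wl ! 1) = even (wl' ! 1) \<and> even (wl ! 2) = even (wl' ! 2) \<and> even (wl ! 3) = even (wl' ! 3)"
  using Y m by (simp add: Y1[unfolded One_nat_def] Y2 Y3 Y4 Y5 Y6 par_iff) argo

lemma R126: assumes m: "6 \<le> m" and Y: "Yv 1 (wl, kl) = Yv 1 (wl', kl')" "Yv 2 (wl, kl) = Yv 2 (wl', kl')" "Yv 6 (wl, kl) = Yv 6 (wl', kl')"
  shows "even (wl ! 0) = even (wl' ! 0) \<and> even (wl ! 1) = even (wl' ! 1) \<and> even (wl ! 2) = even (wl' ! 2) \<and> even (wl ! 3) = even (wl' ! 3)"
  using Y m by (simp add: Y1[unfolded One_nat_def] Y2 Y3 Y4 Y5 Y6 par_iff) argo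

lemma R135: assumes m: "5 \<le> m" and Y: "Yv 1 (wl, kl) = Yv 1 (wl', kl')" "Yv 3 (wl, kl) = Yv 3 (wl', kl')" "Yv 5 (wl, kl) = Yv 5 (wl', kl')"
  shows "even (wl ! 0) = even (wl' ! 0) \<and> even (wl ! 1) = even (wl' ! 1) \<and> even (wl ! 2) = even (wl' ! 2) \<and> even (wl ! 3) = even (wl' ! 3)"
  using Y m by (simp add: Y1[unfolded One_nat_def] Y2 Y3 Y4 Y5 Y6 par_iff) argo

lemma R136: assumes m: "6 \<le> m" and Y: "Yv 1 (wl, kl) = Yv 1 (wl', kl')" "Yv 3 (wl, kl) = Yv 3 (wl', kl')" "Yv 6 (wl, kl) = Yv 6 (wl', kl')"
  shows "even (wl ! 0) = even (wl' ! 0) \<and> even (wl ! 1) = even (wl' ! 1) \<and> even (wl ! 2) = even (wl' ! 2) \<and> even (wl ! 3) = even (wl' ! 3)"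
  using Y m by (simp add: Y1[unfolded One_nat_def] Y2 Y3 Y4 Y5 Y6 par_iff) argo

lemma R145: assumes m: "5 \<le> m" and Y: "Yv 1 (wl, kl) = Yv 1 (wl', kl')" "Yv 4 (wl, kl) = Yv 4 (wl', kl')" "Yv 5 (wl, kl) = Yv 5 (wl', kl')"
  shows "even (wl ! 0) = even (wl' ! 0) \<and> even (wl ! 1) = even (wl' ! 1) \<and> even (wl ! 2) = even (wl' ! 2) \<and> even (wl ! 3) = even (wl' ! 3)"
  using Y m by (simp add: Y1[unfolded One_nat_def] Y2 Y3 Y4 Y5 Y6 par_iff) argo

lemma R146: assumes m: "6 \<le> m" and Y: "Yv 1 (wl, kl) = Yv 1 (wl', kl')" "Yv 4 (wl, kl) = Yv 4 (wl', kl')" "Yv 6 (wl, kl) = Yv 6 (wl', kl')"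
  shows "even (wl ! 0) = even (wl' ! 0) \<and> even (wl ! 1) = even (wl' ! 1) \<and> even (wl ! 2) = even (wl' ! 2) \<and> even (wl ! 3) = even (wl' ! 3)"
  using Y m by (simp add: Y1[unfolded One_nat_def] Y2 Y3 Y4 Y5 Y6 par_iff) argo

lemma R156: assumes m: "6 \<le> m" and Y: "Yv 1 (wl, kl) = Yv 1 (wl', kl')" "Yv 5 (wl, kl) = Yv 5 (wl', kl')" "Yv 6 (wl, kl) = Yv 6 (wl', kl')"
  shows "even (wl ! 0) = even (wl' ! 0) \<and> even (wl ! 1) = even (wl' ! 1) \<and> even (wl ! 2) = even (wl' ! 2) \<and> even (wl ! 3) = even (wl' ! 3)"
  using Y m by (simp add: Y1[unfolded One_nat_def] Y2 Y3 Y4 Y5 Y6 par_iff) argo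

lemma R235: assumes m: "5 \<le> m" and Y: "Yv 2 (wl, kl) = Yv 2 (wl', kl')" "Yv 3 (wl, kl) = Yv 3 (wl', kl')" "Yv 5 (wl, kl) = Yv 5 (wl', kl')"
  shows "even (wl ! 0) = even (wl' ! 0) \<and> even (wl ! 1) = even (wl' ! 1) \<and> even (wl ! 2) = even (wl' ! 2) \<and> even (wl ! 3) = even (wl' ! 3)"
  using Y m by (simp add: Y1[unfolded One_nat_def] Y2 Y3 Y4 Y5 Y6 par_iff) argo

lemma R236: assumes m: "6 \<le> m" and Y: "Yv 2 (wl, kl) = Yv 2 (wl', kl')" "Yv 3 (wl, kl) = Yv 3 (wl', kl')" "Yv 6 (wl, kl) = Yv 6 (wl', kl')"
  shows "even (wl ! 0) = even (wl' ! 0) \<and> even (wl ! 1) = even (wl' ! 1) \<and> even (wl ! 2) = even (wl' ! 2) \<and> even (wl ! 3) = even (wl' ! 3)"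
  using Y m by (simp add: Y1[unfolded One_nat_def] Y2 Y3 Y4 Y5 Y6 par_iff) argo

lemma R245: assumes m: "5 \<le> m" and Y: "Yv 2 (wl, kl) = Yv 2 (wl', kl')" "Yv 4 (wl, kl) = Yv 4 (wl', kl')" "Yv 5 (wl, kl) = Yv 5 (wl', kl')"
  shows "even (wl ! 0) = even (wl' ! 0) \<and> even (wl ! 1) = even (wl' ! 1) \<and> even (wl ! 2) = even (wl' ! 2) \<and> even (wl ! 3) = even (wl' ! 3)"
  using Y m by (simp add: Y1[unfolded One_nat_def] Y2 Y3 Y4 Y5 Y6 par_iff) argo

lemma R246: assumes m: "6 \<le> m" and Y: "Yv 2 (wl, kl) = Yv 2 (wl', kl')" "Yv 4 (wl, kl) = Yv 4 (wl', kl')" "Yv 6 (wl, kl) = Yv 6 (wl', kl')"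
  shows "even (wl ! 0) = even (wl' ! 0) \<and> even (wl ! 1) = even (wl' ! 1) \<and> even (wl ! 2) = even (wl' ! 2) \<and> even (wl ! 3) = even (wl' ! 3)"
  using Y m by (simp add: Y1[unfolded One_nat_def] Y2 Y3 Y4 Y5 Y6 par_iff) argo

lemma R256: assumes m: "6 \<le> m" and Y: "Yv 2 (wl, kl) = Yv 2 (wl', kl')" "Yv 5 (wl, kl) = Yv 5 (wl', kl')" "Yv 6 (wl, kl) = Yv 6 (wl', kl')"
  shows "even (wl ! 0) = even (wl' ! 0) \<and> even (wl ! 1) = even (wl' ! 1) \<and> even (wl ! 2) = even (wl' ! 2) \<and> even (wl ! 3) = even (wl' ! 3)"
  using Y m by (simp add: Y1[unfolded One_nat_def] Y2 Y3 Y4 Y5 Y6 par_iff) argo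

lemma R345: assumes m: "5 \<le> m" and Y: "Yv 3 (wl, kl) = Yv 3 (wl', kl')" "Yv 4 (wl, kl) = Yv 4 (wl', kl')" "Yv 5 (wl, kl) = Yv 5 (wl', kl')"
  shows "even (wl ! 0) = even (wl' ! 0) \<and> even (wl ! 1) = even (wl' ! 1) \<and> even (wl ! 2) = even (wl' ! 2) \<and> even (wl ! 3) = even (wl' ! 3)"
  using Y m by (simp add: Y1[unfolded One_nat_def] Y2 Y3 Y4 Y5 Y6 par_iff) argo

lemma R346: assumes m: "6 \<le> m" and Y: "Yv 3 (wl, kl) = Yv 3 (wl', kl')" "Yv 4 (wl, kl) = Yv 4 (wl', kl')" "Yv 6 (wl, kl) = Yv 6 (wl', kl')"
  shows "even (wl ! 0) = even (wl' ! 0) \<and> even (wl ! 1) = even (wl' ! 1) \<and> even (wl ! 2) = even (wl' ! 2) \<and> even (wl ! 3) = even (wl' ! 3)"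
  using Y m by (simp add: Y1[unfolded One_nat_def] Y2 Y3 Y4 Y5 Y6 par_iff) argo

lemma R356: assumes m: "6 \<le> m" and Y: "Yv 3 (wl, kl) = Yv 3 (wl', kl')" "Yv 5 (wl, kl) = Yv 5 (wl', kl')" "Yv 6 (wl, kl) = Yv 6 (wl', kl')"
  shows "even (wl ! 0) = even (wl' ! 0) \<and> even (wl ! 1) = even (wl' ! 1) \<and> even (wl ! 2) = even (wl' ! 2) \<and> even (wl ! 3) = even (wl' ! 3)"
  using Y m by (simp add: Y1[unfolded One_nat_def] Y2 Y3 Y4 Y5 Y6 par_iff) argo

lemma R456: assumes m: "6 \<le> m" and Y: "Yv 4 (wl, kl) = Yv 4 (wl', kl')" "Yv 5 (wl, kl) = Yv 5 (wl', kl')" "Yv 6 (wl, kl) = Yv 6 (wl', kl')"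
  shows "even (wl ! 0) = even (wl' ! 0) \<and> even (wl ! 1) = even (wl' ! 1) \<and> even (wl ! 2) = even (wl' ! 2) \<and> even (wl ! 3) = even (wl' ! 3)"
  using Y m by (simp add: Y1[unfolded One_nat_def] Y2 Y3 Y4 Y5 Y6 par_iff) argo


end

context c3
begin

lemma sorted3: assumes "finite T" "card T = 3"
  obtains x y z :: nat where "T = {x, y, z}" "x < y" "y < z"
proof -
  obtain l where l: "sorted_wrt (<) l" "set l = T" "length l = card T"
    using sorted_list_of_set.finite_set_strict_sorted[of T] assms(1) by auto
  then have L: "l = [l ! 0, l ! 1, l ! 2]" using assms(2) list3 by simp
  then have "sorted_wrt (<) [l ! 0, l ! 1, l ! 2]" using l(1) by simp
  then have "l ! 0 < l ! 1" "l ! 1 < l ! 2" by auto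
  moreover have "T = {l ! 0, l ! 1, l ! 2}" using l(2) L by (metis empty_set list.simps(15))
  ultimately show ?thesis using that by blast
qed

lemma dec3:
  assumes T: "T \<in> receiver_sets m 3"
  and d: "fst d \<in> Wl" "snd d \<in> Kl" "fst d' \<in> Wl" "snd d' \<in> Kl"
  and Y: "\<forall>j\<in>T. Yv j d = Yv j d'"
  shows "fst d = fst d'"
proof (cases "T \<subseteq> {1..3+1}")
  case True show ?thesis using dec_small[OF T True d Y] .
next
  case False
  obtain wl kl wl' kl' where dd: "d = (wl, kl)" "d' = (wl', kl')" by (cases d, cases d') auto
  have Tm: "T \<subseteq> {1..m}" "card T = 3" using T by (auto simp: receiver_sets_def)
  then have fin: "finite T" using finite_subset by blast
  obtain x y z where xyz: "T = {x, y, z}" "x < y" "y < z" using sorted3[OF fin Tm(2)] by blast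
  have r: "1 \<le> x" "z \<le> m" using Tm(1) xyz(1) by auto
  have "\<not> z \<le> 4"
  proof
    assume "z \<le> 4"
    then have "T \<subseteq> {1..3+1}" using xyz r by auto
    then show False using False by simp
  qed
  then have z5: "5 \<le> z" by simp
  have Yx: "Yv x (wl, kl) = Yv x (wl', kl')" and Yy: "Yv y (wl, kl) = Yv y (wl', kl')"
    and Yz: "Yv z (wl, kl) = Yv z (wl', kl')" using Y xyz(1) dd by auto
  have mz: "z \<le> m" using r by simp
  consider (c125) "x = 1" "y = 2" "z = 5" | (c126) "x = 1" "y = 2" "z = 6" | (c135) "x = 1" "y = 3" "z = 5" | (c136) "x = 1" "y = 3" "z = 6" | (c145) "x = 1" "y = 4" "z = 5" | (c146) "x = 1" "y = 4" "z = 6" | (c156) "x = 1" "y = 5" "z = 6" | (c235) "x = 2" "y = 3" "z = 5" | (c236) "x = 2" "y = 3" "z = 6" | (c245) "x = 2" "y = 4" "z = 5" | (c246) "x = 2" "y = 4" "z = 6" | (c256) "x = 2" "y = 5" "z = 6" | (c345) "x = 3" "y = 4" "z = 5" | (c346) "x = 3" "y = 4" "z = 6" | (c356) "x = 3" "y = 5" "z = 6" | (c456) "x = 4" "y = 5" "z = 6"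
  proof -
    have z56: "z = 5 \<or> z = 6" using z5 r m6 by arith
    have y25: "y = 2 \<or> y = 3 \<or> y = 4 \<or> y = 5" using xyz(2,3) r z56 by arith
    have x14: "x = 1 \<or> x = 2 \<or> x = 3 \<or> x = 4" using xyz(2,3) r y25 by arith
    show thesis using z56 y25 x14 xyz(2,3) that by (elim disjE) auto
  qed
  then have "even (wl ! 0) = even (wl' ! 0) \<and> even (wl ! 1) = even (wl' ! 1) \<and> even (wl ! 2) = even (wl' ! 2) \<and> even (wl ! 3) = even (wl' ! 3)"
  proof cases
    case c125 then show ?thesis using R125[of wl kl wl' kl'] Yx Yy Yz mz by simp
    next case c126 then show ?thesis using R126[of wl kl wl' kl'] Yx Yy Yz mz by simp
    next case c135 then show ?thesis using R135[of wl kl wl' kl'] Yx Yy Yz mz by simp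
    next case c136 then show ?thesis using R136[of wl kl wl' kl'] Yx Yy Yz mz by simp
    next case c145 then show ?thesis using R145[of wl kl wl' kl'] Yx Yy Yz mz by simp
    next case c146 then show ?thesis using R146[of wl kl wl' kl'] Yx Yy Yz mz by simp
    next case c156 then show ?thesis using R156[of wl kl wl' kl'] Yx Yy Yz mz by simp
    next case c235 then show ?thesis using R235[of wl kl wl' kl'] Yx Yy Yz mz by simp
    next case c236 then show ?thesis using R236[of wl kl wl' kl'] Yx Yy Yz mz by simp
    next case c245 then show ?thesis using R245[of wl kl wl' kl'] Yx Yy Yz mz by simp
    next case c246 then show ?thesis using R246[of wl kl wl' kl'] Yx Yy Yz mz by simp
    next case c256 then show ?thesis using R256[of wl kl wl' kl'] Yx Yy Yz mz by simp
    next case c345 then show ?thesis using R345[of wl kl wl' kl'] Yx Yy Yz mz by simp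
    next case c346 then show ?thesis using R346[of wl kl wl' kl'] Yx Yy Yz mz by simp
    next case c356 then show ?thesis using R356[of wl kl wl' kl'] Yx Yy Yz mz by simp
    next case c456 then show ?thesis using R456[of wl kl wl' kl'] Yx Yy Yz mz by simp
  qed
  then have "wl = wl'" using wl_par d dd by simp
  then show ?thesis using dd by simp
qed


lemma c3_secure: "secure_protocol m 3 2 3 P \<and> secrecy_rate m 3 2 3 P = real ((3 - 1)^2) / real 3"
proof (rule scheme_secure)
  fix T d d' assume "T \<in> receiver_sets m 3" "fst d \<in> Wl" "snd d \<in> Kl" "fst d' \<in> Wl" "snd d' \<in> Kl"
    "\<forall>j\<in>T. Yv j d = Yv j d'"
  then show "fst d = fst d'" by (rule dec3)
next
  fix a wl assume a: "a \<in> adversary_nodes m 3" and wl: "wl \<in> Wl"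
  show "\<exists>\<pi>. inj_on \<pi> Kl \<and> \<pi> ` Kl \<subseteq> Kl \<and>
      (\<forall>kl\<in>Kl. \<forall>e\<in>E. snd e = a \<longrightarrow> X0 (wl, kl) e = X0 (replicate ((3 - 1)^2) 0, \<pi> kl) e)"
  proof (rule sec_all[OF _ a wl])
    fix j wl assume j: "3 + 1 < j" "j \<le> m" and "wl \<in> Wl"
    then have "j = 5 \<or> j = 6" using m6 by arith
    then show "\<exists>\<delta>. \<forall>kl\<in>Kl. \<forall>i. 1 \<le> i \<and> i \<le> 3 \<longrightarrow> Zf i j (wl, kl) = Zf i j (w0, tr 2 \<delta> kl)"
      using sec5 sec6 j by auto
  qed
qed

end

lemma case_iii:
  assumes m: "m \<in> {5, 6}"
  shows "\<exists>q N P. is_field_size q \<and> secure_protocol m 3 q N P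
                 \<and> secrecy_rate m 3 q N P = (real 3 - 1)^2 / real 3"
proof -
  interpret c3 m using m by unfold_locales auto
  show ?thesis using c3_secure field2 rate_eq[of 3] by (intro exI[of _ 2] exI[of _ 3] exI[of _ P]) simp
qed

theorem lemma1:
  fixes m h :: nat
  assumes "(h = 2 \<and> m \<ge> 3) \<or> (h \<ge> 2 \<and> m = h + 1) \<or> (h = 3 \<and> m \<in> {4, 5, 6})"
  shows "\<exists>q N P. is_field_size q \<and> secure_protocol m h q N P
                 \<and> secrecy_rate m h q N P = (real h - 1)^2 / real h"
proof -
  consider (a) "h = 2" "m = 3" | (b) "h = 2" "m \<ge> 4" | (c) "h \<ge> 2" "m = h + 1" | (d) "h = 3" "m = 4"
    | (e) "h = 3" "m \<in> {5, 6}"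
    using assms by force
  then show ?thesis
  proof cases
    case a then show ?thesis using case_ii[of 2] by simp
  next
    case b then show ?thesis using case_i4[of m] by simp
  next
    case c then show ?thesis using case_ii[of h] by simp
  next
    case d then show ?thesis using case_ii[of 3] by simp
  next
    case e then show ?thesis using case_iii[of m] by simp
  qed
qed

end
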